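(* Let $0<|z_1|,|z_2|<1$. For every $W'\in\mathcal W^0(\mathfrak X^{(1)}_{1\otimes2})$ and $W''\in\mathcal W^0(\mathfrak X^{(2)}_{1\otimes2})$ put $$\varphi(W',W'')=\iota_{1\otimes2}^{-1}\big(\theta^{(1)}_{1\otimes2}(W')\otimes\theta^{(2)}_{1\otimes2}(W'')\big)\in\mathcal B^0 .$$ Then $$L\big(\theta^{(1)}_{1\otimes2}(W');z_1\big)\,L\big(\theta^{(2)}_{1\otimes2}(W'');z_2\big)=\int_{C_{2\otimes1}}\iota_{2\otimes1}\big(\varphi(W',W'')\big).$$ These identities (the generalized harmonic product relations of hyperlogarithms of type $\mathcal M_{0,5}$) are exactly the relations obtained by comparing coefficients in the two factorizations $\hat{\mathcal L}=\hat{\mathcal L}^{(1)}_{1\otimes2}\hat{\mathcal L}^{(2)}_{1\otimes2}=\hat{\mathcal L}^{(2)}_{2\otimes1}\hat{\mathcal L}^{(1)}_{2\otimes1}$ of the normalized fundamental solution of the formal 2KZ equation.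
   Context: Lie algebra: $\mathfrak X$ is the complex Lie algebra generated by $Z_1,Z_{11},Z_2,Z_{22},Z_{12}$ subject only to $[Z_1,Z_2]=[Z_{11},Z_2]=[Z_1,Z_{22}]=0$ and $[Z_{11},Z_{22}]=-[Z_{11},Z_{12}]=[Z_{22},Z_{12}]=-[Z_1-Z_2,Z_{12}]$. Let $\mathfrak X^{(1)}_{1\otimes2},\mathfrak X^{(2)}_{1\otimes2}$ be the Lie subalgebras generated by $\{Z_1,Z_{11},Z_{12}\}$ and $\{Z_2,Z_{22}\}$ (they are free on these generators). For such a subalgebra $\mathfrak A$, $\mathcal W^0(\mathfrak A)$ is the set of words (noncommutative monomials, including the empty word) in its generators not ending with $Z_1$ or $Z_2$. Forms: on $\mathbf P^1\times\mathbf P^1$ with coordinates $(z_1,z_2)$, $\zeta_i=dz_i/z_i$, $\zeta_{ii}=dz_i/(1-z_i)$ ($i=1,2$), $\zeta_{12}=d(z_1z_2)/(1-z_1z_2)$, $\zeta^{(1)}_{12}=z_2dz_1/(1-z_1z_2)$, $\zeta^{(2)}_{12}=z_1dz_2/(1-z_1z_2)$. Shuffle algebras: for an alphabet $B$ of such 1-forms, $S(B)$ is the vector space with basis the words in $B$ (empty word $\mathbf 1$), with concatenation $\circ$, shuffle product, and deconcatenation coproduct $\Delta^*(\omega_1\circ\cdots\circ\omega_s)=\sum_{l=0}^s(\omega_1\circ\cdots\circ\omega_l)\otimes(\omega_{l+1}\circ\cdots\circ\omega_s)$. $A=\{\zeta_1,\zeta_{11},\zeta_2,\zeta_{22},\zeta_{12}\}$;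 $A^{(1)}_{1\otimes2}=\{\zeta_1,\zeta_{11},\zeta^{(1)}_{12}\}$, $A^{(2)}_{1\otimes2}=\{\zeta_2,\zeta_{22}\}$, $A^{(2)}_{2\otimes1}=\{\zeta_2,\zeta_{22},\zeta^{(2)}_{12}\}$, $A^{(1)}_{2\otimes1}=\{\zeta_1,\zeta_{11}\}$; $S^0(\cdot)$ denotes the span of words not ending in $\zeta_1$ or $\zeta_2$. An element $\sum_I c_I\omega_{i_1}\circ\cdots\circ\omega_{i_s}\in S_s(A)$ satisfies Chen's integrability condition if for each $1\le l<s$, $\sum_I c_I\omega_{i_1}\otimes\cdots\otimes(\omega_{i_l}\wedge\omega_{i_{l+1}})\otimes\cdots\otimes\omega_{i_s}=0$ as a multiple differential form. $\mathcal B$ (reduced bar algebra) is the graded span of such elements, and $\mathcal B^0$ the subspace of elements none of whose words ends in $\zeta_1$ or $\zeta_2$. Maps: for $\{i_1,i_2\}=\{1,2\}$, $\Pr^{(i_1)}_{i_1\otimes i_2}:S(A)\to S(A^{(i_1)}_{i_1\otimes i_2})$ is the linear map replacing each letter of a word by its restriction to $dz_{i_2}=0$ ($\zeta_{i_1}\mapsto\zeta_{i_1}$, $\zeta_{i_1i_1}\mapsto\zeta_{i_1i_1}$, $\zeta_{12}\mapsto\zeta^{(i_1)}_{12}$, $\zeta_{i_2},\zeta_{i_2i_2}\mapsto0$), and $\Pr^{(i_2)}_{i_1\otimes i_2}:S(A)\to S(A^{(i_2)}_{i_1\otimes i_2})$ fixes words in $\zeta_{i_2},\zeta_{i_2i_2}$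 and kills all other words; $\iota_{i_1\otimes i_2}=(\Pr^{(i_1)}_{i_1\otimes i_2}\otimes\Pr^{(i_2)}_{i_1\otimes i_2})\circ\Delta^*|_{\mathcal B}$. It is known (shown in the paper) that $\iota_{i_1\otimes i_2}$ restricts to a linear bijection $\mathcal B^0\to S^0(A^{(i_1)}_{i_1\otimes i_2})\otimes S^0(A^{(i_2)}_{i_1\otimes i_2})$. $\theta^{(k)}_{1\otimes2}$ maps a word in the generators of $\mathfrak X^{(k)}_{1\otimes2}$ to the word in $S(A^{(k)}_{1\otimes2})$ obtained by $Z_k\mapsto\zeta_k$, $Z_{kk}\mapsto\zeta_{kk}$, $Z_{12}\mapsto\zeta^{(1)}_{12}$. Integrals: for 1-forms $\omega_1,\dots,\omega_r$ in one variable $t$ (possibly depending on the other variable as a parameter), $\int_0^z\omega_1\circ\cdots\circ\omega_r=\int_0^z\omega_1(t)\int_0^t\omega_2\circ\cdots\circ\omega_r$, $\int_0^z\mathbf 1=1$, extended linearly; $L(\psi;z_1)=\int_0^{z_1}\psi$ (integration in $z_1$, $z_2$ fixed) and $L(\psi;z_2)=\int_0^{z_2}\psi$ (integration in $z_2$, $z_1$ fixed). For $\psi_1\otimes\psi_2\in S^0(A^{(2)}_{2\otimes1})\otimes S^0(A^{(1)}_{2\otimes1})$, $\int_{C_{2\otimes1}}\psi_1\otimes\psi_2=\int_0^{z_2}\psi_1\cdot\int_0^{z_1}\psi_2$ (iterated integral along the path $(0,0)\to(z_1,0)\to(z_1,z_2)$), extended linearly. Formal 2KZ equation: $dG=\Omega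 G$, $\Omega=\zeta_1Z_1+\zeta_{11}Z_{11}+\zeta_2Z_2+\zeta_{22}Z_{22}+\zeta_{12}Z_{12}$; its normalized fundamental solution at the origin is $\mathcal L=\hat{\mathcal L}z_1^{Z_1}z_2^{Z_2}$ with $\hat{\mathcal L}$ holomorphic near $(0,0)$, $\hat{\mathcal L}(0,0)=\mathbf I$; $\hat{\mathcal L}^{(1)}_{1\otimes2},\hat{\mathcal L}^{(2)}_{1\otimes2},\hat{\mathcal L}^{(2)}_{2\otimes1},\hat{\mathcal L}^{(1)}_{2\otimes1}$ are the holomorphic parts of the normalized (at the origin of the differentiated variable) fundamental solutions of $d_{z_1}G=(\zeta_1Z_1+\zeta_{11}Z_{11}+\zeta^{(1)}_{12}Z_{12})G$, $d_{z_2}G=(\zeta_2Z_2+\zeta_{22}Z_{22})G$, $d_{z_2}G=(\zeta_2Z_2+\zeta_{22}Z_{22}+\zeta^{(2)}_{12}Z_{12})G$, $d_{z_1}G=(\zeta_1Z_1+\zeta_{11}Z_{11})G$ respectively. *)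

theory Defs
  imports "HOL-Complex_Analysis.Contour_Integration"
begin

datatype form =
    zeta1
  | zeta11
  | zeta2
  | zeta22
  | zeta12
  | zeta12_1
  | zeta12_2

text \<open>A 1-form is f dz1 + g dz2; coef w False p = f(p), coef w True p = g(p).\<close>
fun coef :: "form \<Rightarrow> bool \<Rightarrow> complex \<times> complex \<Rightarrow> complex" where
  "coef zeta1 k (x,y) = (if k then 0 else 1 / x)"
| "coef zeta11 k (x,y) = (if k then 0 else 1 / (1 - x))"
| "coef zeta2 k (x,y) = (if k then 1 / y else 0)"
| "coef zeta22 k (x,y) = (if k then 1 / (1 - y) else 0)"
| "coef zeta12 k (x,y) = (if k then x / (1 - x*y) else y / (1 - x*y))"
| "coef zeta12_1 k (x,y) = (if k then 0 else y / (1 - x*y))"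
| "coef zeta12_2 k (x,y) = (if k then x / (1 - x*y) else 0)"

definition wedge_coef :: "form \<Rightarrow> form \<Rightarrow> complex \<times> complex \<Rightarrow> complex" where
  "wedge_coef w v p = coef w False p * coef v True p - coef w True p * coef v False p"

definition dom2 :: "(complex \<times> complex) set" where
  "dom2 = {(x,y). x \<noteq> 0 \<and> y \<noteq> 0 \<and> x \<noteq> 1 \<and> y \<noteq> 1 \<and> x*y \<noteq> 1}"

definition alphA :: "form set" where
  "alphA = {zeta1, zeta11, zeta2, zeta22, zeta12}"

type_synonym selt = "form list \<Rightarrow> complex"
type_synonym telt = "form list \<times> form list \<Rightarrow> complex"

definition supp :: "('a \<Rightarrow> complex) \<Rightarrow> 'a set" where
  "supp c = {w. c w \<noteq> 0}"

text \<open>The multiple form  sum_I c_I w_1 (x) ... (x) (w_m /\ w_(m+1)) (x) ... (x) w_s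
  is zero iff all its component functions (external tensor product on
  (C^2)^(s-1), slot j evaluated at point ps j with component ks j) vanish
  on the domain.\<close>
definition chen_hom :: "nat \<Rightarrow> selt \<Rightarrow> bool" where
  "chen_hom s c \<longleftrightarrow>
     (\<forall>m. Suc m < s \<longrightarrow>
        (\<forall>(ps :: nat \<Rightarrow> complex \<times> complex) (ks :: nat \<Rightarrow> bool).
           (\<forall>j. ps j \<in> dom2) \<longrightarrow>
           (\<Sum>w\<in>{w. c w \<noteq> 0 \<and> length w = s}.
               c w * wedge_coef (w ! m) (w ! Suc m) (ps m) *
               (\<Prod>j\<in>{0..<s} - {m, Suc m}. coef (w ! j) (ks j) (ps j))) = 0))"

definition barB :: "selt set" where
  "barB = {c. finite (supp c) \<and> (\<forall>w \<in> supp c. set w \<subseteq> alphA) \<and>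
             (\<forall>s. chen_hom s (\<lambda>w. if length w = s then c w else 0))}"

definition barB0 :: "selt set" where
  "barB0 = {c \<in> barB. \<forall>w \<in> supp c. w = [] \<or> last w \<notin> {zeta1, zeta2}}"

text \<open>Letterwise maps (None = the letter is sent to 0).\<close>
fun pr1_12 :: "form \<Rightarrow> form option" where   (* restriction to dz2 = 0 *)
  "pr1_12 zeta1 = Some zeta1"
| "pr1_12 zeta11 = Some zeta11"
| "pr1_12 zeta12 = Some zeta12_1"
| "pr1_12 _ = None"

fun pr2_12 :: "form \<Rightarrow> form option" where
  "pr2_12 zeta2 = Some zeta2"
| "pr2_12 zeta22 = Some zeta22"
| "pr2_12 _ = None"

fun pr2_21 :: "form \<Rightarrow> form option" where   (* restriction to dz1 = 0 *)
  "pr2_21 zeta2 = Some zeta2"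
| "pr2_21 zeta22 = Some zeta22"
| "pr2_21 zeta12 = Some zeta12_2"
| "pr2_21 _ = None"

fun pr1_21 :: "form \<Rightarrow> form option" where
  "pr1_21 zeta1 = Some zeta1"
| "pr1_21 zeta11 = Some zeta11"
| "pr1_21 _ = None"

definition word_map :: "(form \<Rightarrow> form option) \<Rightarrow> form list \<Rightarrow> form list option" where
  "word_map f w = (if (\<forall>x\<in>set w. f x \<noteq> None) then Some (map (the \<circ> f) w) else None)"

text \<open>(Pr_a (x) Pr_b) o (deconcatenation coproduct), as element of the tensor product
  (functions on pairs of words).\<close>
definition iota_gen :: "(form \<Rightarrow> form option) \<Rightarrow> (form \<Rightarrow> form option) \<Rightarrow> selt \<Rightarrow> telt" where
  "iota_gen f g c = (\<lambda>(u,v). \<Sum>w\<in>supp c. c w *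
       of_nat (card {l. l \<le> length w \<and> word_map f (take l w) = Some u
                                     \<and> word_map g (drop l w) = Some v}))"

definition iota12 :: "selt \<Rightarrow> telt" where
  "iota12 = iota_gen pr1_12 pr2_12"

definition iota21 :: "selt \<Rightarrow> telt" where
  "iota21 = iota_gen pr2_21 pr1_21"

definition tensor_basis :: "form list \<Rightarrow> form list \<Rightarrow> telt" where
  "tensor_basis u v = (\<lambda>p. if p = (u,v) then 1 else 0)"

datatype gen = Z1 | Z11 | Z2 | Z22 | Z12

definition W0_1 :: "gen list set" where
  "W0_1 = {W. set W \<subseteq> {Z1, Z11, Z12} \<and> (W = [] \<or> last W \<noteq> Z1)}"

definition W0_2 :: "gen list set" where
  "W0_2 = {W. set W \<subseteq> {Z2, Z22} \<and> (W = [] \<or> last W \<noteq> Z2)}"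

fun theta_letter1 :: "gen \<Rightarrow> form" where
  "theta_letter1 Z1 = zeta1"
| "theta_letter1 Z11 = zeta11"
| "theta_letter1 Z12 = zeta12_1"
| "theta_letter1 _ = undefined"

fun theta_letter2 :: "gen \<Rightarrow> form" where
  "theta_letter2 Z2 = zeta2"
| "theta_letter2 Z22 = zeta22"
| "theta_letter2 _ = undefined"

definition theta1 :: "gen list \<Rightarrow> form list" where
  "theta1 W = map theta_letter1 W"

definition theta2 :: "gen list \<Rightarrow> form list" where
  "theta2 W = map theta_letter2 W"

fun L1 :: "form list \<Rightarrow> complex \<Rightarrow> complex \<Rightarrow> complex" where
  "L1 [] x y = 1"
| "L1 (w # ws) x y = contour_integral (linepath 0 x) (\<lambda>t. coef w False (t, y) * L1 ws t y)"

fun L2 :: "form list \<Rightarrow> complex \<Rightarrow> complex \<Rightarrow> complex" where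
  "L2 [] x y = 1"
| "L2 (w # ws) x y = contour_integral (linepath 0 y) (\<lambda>t. coef w True (x, t) * L2 ws x t)"

definition int_C21 :: "telt \<Rightarrow> complex \<Rightarrow> complex \<Rightarrow> complex" where
  "int_C21 P x y = (\<Sum>p\<in>supp P. P p * L2 (fst p) x y * L1 (snd p) x y)"

end

theory Submission
  imports Defs "HOL-Analysis.FPS_Convergence"
begin

unbundle no vec_syntax
notation fps_nth (infixl "$" 75)


type_synonym ser = "complex fps fps"

definition thx :: "ser \<Rightarrow> ser" where "thx P = fps_X * fps_deriv P"
definition th1 :: "complex fps \<Rightarrow> complex fps" where "th1 p = fps_X * fps_deriv p"
definition thy :: "ser \<Rightarrow> ser" where "thy P = Abs_fps (\<lambda>i. th1 (P $ i))"
definition Jx :: "ser \<Rightarrow> ser" where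
  "Jx P = Abs_fps (\<lambda>i. if i = 0 then 0 else fps_const (1 / of_nat i) * P $ i)"
definition Tr :: "ser \<Rightarrow> ser" where "Tr P = Abs_fps (\<lambda>i. Abs_fps (\<lambda>j. P $ j $ i))"
definition cst :: "complex \<Rightarrow> ser" where "cst c = fps_const (fps_const c)"

lemma th1_nth[simp]: "th1 p $ n = of_nat n * p $ n"
  by (cases n) (simp_all add: th1_def fps_X_mult_nth)
lemma thx_nth[simp]: "thx P $ n = of_nat n * P $ n"
  by (cases n) (simp_all add: thx_def fps_X_mult_nth)
lemma thy_nth[simp]: "thy P $ n = th1 (P $ n)"
  by (simp add: thy_def)
lemma Tr_nth[simp]: "Tr P $ i $ j = P $ j $ i"
  by (simp add: Tr_def)
lemma Jx_nth[simp]: "Jx P $ i = (if i = 0 then 0 else fps_const (1 / of_nat i) * P $ i)"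
  by (simp add: Jx_def)

lemma ser_eqI: "(\<And>i j. P $ i $ j = Q $ i $ j) \<Longrightarrow> P = Q"
  by (simp add: fps_ext)

lemma Tr_Tr[simp]: "Tr (Tr P) = P" by (rule ser_eqI) simp
lemma Tr_add[simp]: "Tr (P + Q) = Tr P + Tr Q" by (rule ser_eqI) simp
lemma Tr_diff[simp]: "Tr (P - Q) = Tr P - Tr Q" by (rule ser_eqI) simp
lemma Tr_zero[simp]: "Tr 0 = 0" by (rule ser_eqI) simp
lemma Tr_one[simp]: "Tr 1 = 1" by (rule ser_eqI) (simp add: fps_one_nth)
lemma Tr_cst[simp]: "Tr (cst c) = cst c" by (rule ser_eqI) (simp add: cst_def)

lemma ser_mult_nth: "(P * Q) $ i $ j = (\<Sum>k=0..i. \<Sum>l=0..j. P $ k $ l * Q $ (i - k) $ (j - l))"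
  by (simp add: fps_mult_nth fps_sum_nth)

lemma Tr_mult[simp]: "Tr (P * Q) = Tr P * Tr Q"
  by (rule ser_eqI) (simp only: Tr_nth ser_mult_nth, rule sum.swap)

lemma thx_Tr: "thx (Tr P) = Tr (thy P)" by (rule ser_eqI) simp
lemma thy_Tr: "thy (Tr P) = Tr (thx P)" by (rule ser_eqI) simp

lemma thx_add[simp]: "thx (P + Q) = thx P + thx Q" by (simp add: thx_def algebra_simps)
lemma thx_diff[simp]: "thx (P - Q) = thx P - thx Q" by (simp add: thx_def algebra_simps)
lemma thx_mult: "thx (P * Q) = thx P * Q + P * thx Q" by (simp add: thx_def fps_deriv_mult algebra_simps)
lemma thx_zero[simp]: "thx 0 = 0" by (simp add: thx_def)
lemma thx_one[simp]: "thx 1 = 0" by (simp add: thx_def)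
lemma thx_cst[simp]: "thx (cst c) = 0" by (simp add: thx_def cst_def)
lemma thx_sum: "thx (sum f S) = (\<Sum>x\<in>S. thx (f x))"
  by (induction S rule: infinite_finite_induct) auto

lemma thy_add[simp]: "thy (P + Q) = thy P + thy Q"
  by (metis Tr_Tr Tr_add thx_Tr thx_add)
lemma thy_diff[simp]: "thy (P - Q) = thy P - thy Q"
  by (metis Tr_Tr Tr_diff thx_Tr thx_diff)
lemma thy_mult: "thy (P * Q) = thy P * Q + P * thy Q"
  by (metis Tr_Tr Tr_add Tr_mult thx_Tr thx_mult)
lemma thy_zero[simp]: "thy 0 = 0" by (metis Tr_zero thx_zero thy_Tr)
lemma thy_one[simp]: "thy 1 = 0" by (rule ser_eqI) (simp add: fps_one_nth)
lemma thy_cst[simp]: "thy (cst c) = 0" by (rule ser_eqI) (simp add: cst_def)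
lemma thy_sum: "thy (sum f S) = (\<Sum>x\<in>S. thy (f x))"
  by (induction S rule: infinite_finite_induct) auto
lemma thx_thy: "thx (thy P) = thy (thx P)" by (rule ser_eqI) (simp add: algebra_simps)

lemma cst_add: "cst (a + b) = cst a + cst b" by (simp add: cst_def)
lemma cst_diff: "cst (a - b) = cst a - cst b" by (simp add: cst_def)
lemma cst_mult: "cst (a * b) = cst a * cst b" by (simp add: cst_def)
lemma cst_0[simp]: "cst 0 = 0" by (simp add: cst_def)
lemma cst_1[simp]: "cst 1 = 1" by (simp add: cst_def)
lemma cst_sum: "cst (sum f S) = (\<Sum>x\<in>S. cst (f x))"
  by (induction S rule: infinite_finite_induct) (auto simp: cst_add)
lemma cst_of_nat: "cst (of_nat n) = of_nat n" by (simp add: cst_def fps_of_nat)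

lemma of_nat_fps_mult_nth[simp]: "(of_nat n * f) $ j = of_nat n * f $ j"
  by (metis fps_mult_left_const_nth fps_of_nat)

lemma thx_Jx: "thx (Jx P) = P - fps_const (P $ 0)"
  by (rule ser_eqI) auto



definition Aser :: ser where "Aser = Abs_fps (\<lambda>i. if i = 0 then 0 else 1)"
definition Cser :: ser where "Cser = Abs_fps (\<lambda>i. if i = 0 then 0 else fps_X ^ i)"
definition Bser :: ser where "Bser = Tr Aser"

lemma Aser_nth[simp]: "Aser $ i = (if i = 0 then 0 else 1)" by (simp add: Aser_def)
lemma Cser_nth[simp]: "Cser $ i = (if i = 0 then 0 else fps_X ^ i)" by (simp add: Cser_def)
lemma Tr_Cser[simp]: "Tr Cser = Cser"
  by (rule ser_eqI) (auto simp: fps_X_power_nth)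

lemma Yc_Tr: "Tr fps_X = fps_const fps_X"
  by (rule ser_eqI) (auto simp: fps_X_nth)

lemma A_eq: "(1 - fps_X) * Aser = fps_X"
  by (rule fps_ext) (auto simp: algebra_simps fps_X_mult_nth fps_X_nth)

lemma B_eq: "(1 - fps_const fps_X) * Bser = fps_const fps_X"
proof -
  have "Tr ((1 - fps_X) * Aser) = Tr fps_X" by (simp add: A_eq)
  thus ?thesis by (simp add: Bser_def Yc_Tr)
qed

lemma C_eq: "(1 - fps_X * fps_const fps_X) * Cser = fps_X * fps_const fps_X"
proof (rule fps_ext)
  fix n
  show "((1 - fps_X * fps_const fps_X) * Cser) $ n = (fps_X * fps_const fps_X) $ n"
    by (cases n) (auto simp: algebra_simps fps_X_mult_nth fps_X_nth fps_mult_left_const_nth)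
qed

lemma ABC: "Aser * Bser = Cser + Aser * Cser + Bser * Cser"
proof -
  define X :: ser where "X = fps_X"
  define Y :: ser where "Y = fps_const fps_X"
  define D where "D = (1 - X) * (1 - Y) * (1 - X * Y)"
  have a: "(1 - X) * Aser = X" and b: "(1 - Y) * Bser = Y" and c: "(1 - X * Y) * Cser = X * Y"
    using A_eq B_eq C_eq by (simp_all add: X_def Y_def)
  have "D * (Aser * Bser) = ((1 - X) * Aser) * ((1 - Y) * Bser) * (1 - X * Y)"
    by (simp add: D_def algebra_simps)
  also have "\<dots> = X * Y * (1 - X * Y)" by (simp add: a b)
  finally have 1: "D * (Aser * Bser) = X * Y * (1 - X * Y)" .
  have "D * (Cser + Aser * Cser + Bser * Cser) =
      (1 - X) * (1 - Y) * ((1 - X * Y) * Cser) + ((1 - X) * Aser) * (1 - Y) * ((1 - X * Y) * Cser)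
      + ((1 - Y) * Bser) * (1 - X) * ((1 - X * Y) * Cser)"
    by (simp add: D_def algebra_simps)
  also have "\<dots> = X * Y * (1 - X * Y)" by (simp only: a b c) (simp add: algebra_simps)
  finally have 2: "D * (Cser + Aser * Cser + Bser * Cser) = X * Y * (1 - X * Y)" .
  have "D \<noteq> 0"
  proof
    assume "D = 0"
    hence "D $ 0 $ 0 = 0" by simp
    moreover have "D $ 0 $ 0 = 1"
      by (simp add: D_def X_def Y_def fps_mult_nth fps_X_nth)
    ultimately show False by simp
  qed
  with 1 2 show ?thesis by (metis mult_left_cancel)
qed


fun Fx :: "form \<Rightarrow> ser" where
  "Fx zeta1 = 1" | "Fx zeta11 = Aser" | "Fx zeta12 = Cser" | "Fx zeta12_1 = Cser"
| "Fx zeta2 = 0" | "Fx zeta22 = 0" | "Fx zeta12_2 = 0"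

fun swapL :: "form \<Rightarrow> form" where
  "swapL zeta1 = zeta2" | "swapL zeta2 = zeta1" | "swapL zeta11 = zeta22" | "swapL zeta22 = zeta11"
| "swapL zeta12 = zeta12" | "swapL zeta12_1 = zeta12_2" | "swapL zeta12_2 = zeta12_1"

lemma swapL_swapL[simp]: "swapL (swapL a) = a" by (cases a) auto

definition Gy :: "form \<Rightarrow> ser" where "Gy a = Tr (Fx (swapL a))"

lemma Gy_simps[simp]: "Gy zeta1 = 0" "Gy zeta11 = 0" "Gy zeta2 = 1" "Gy zeta22 = Bser"
  "Gy zeta12 = Cser" "Gy zeta12_1 = 0" "Gy zeta12_2 = Cser"
  by (simp_all add: Gy_def Bser_def)

fun L1f :: "form list \<Rightarrow> ser" where
  "L1f [] = 1"
| "L1f (a # u) = Jx (Fx a * L1f u)"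

definition L2f :: "form list \<Rightarrow> ser" where "L2f u = Tr (L1f (map swapL u))"

lemma L2f_Nil[simp]: "L2f [] = 1" by (simp add: L2f_def)

lemma Fx_nth0: "Fx a $ 0 = (if a = zeta1 then 1 else 0)"
  by (cases a) auto

lemma L1f_nth0: "L1f u $ 0 = (if u = [] then 1 else 0)"
  by (cases u) auto

lemma thx_L1f_Cons: "thx (L1f (a # u)) = Fx a * L1f u - (if a = zeta1 \<and> u = [] then 1 else 0)"
proof -
  have "(Fx a * L1f u) $ 0 = (if a = zeta1 \<and> u = [] then 1 else 0)"
    by (simp add: fps_mult_nth Fx_nth0 L1f_nth0)
  thus ?thesis by (simp add: thx_Jx)
qed

lemma swapL_eq_iff: "swapL a = b \<longleftrightarrow> a = swapL b" by auto

lemma thy_L2f_Cons: "thy (L2f (a # u)) = Gy a * L2f u - (if a = zeta2 \<and> u = [] then 1 else 0)"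
  unfolding L2f_def list.map thy_Tr thx_L1f_Cons by (simp add: Gy_def swapL_eq_iff)

definition yc :: "ser \<Rightarrow> bool" where "yc P \<longleftrightarrow> (\<forall>i j. 0 < j \<longrightarrow> P $ i $ j = 0)"
definition xc :: "ser \<Rightarrow> bool" where "xc P \<longleftrightarrow> (\<forall>i. 0 < i \<longrightarrow> P $ i = 0)"

lemma thy_yc: "yc P \<Longrightarrow> thy P = 0"
  by (rule ser_eqI) (auto simp: yc_def)
lemma thx_xc: "xc P \<Longrightarrow> thx P = 0"
  by (rule fps_ext) (auto simp: xc_def)
lemma xc_Tr: "xc (Tr P) \<longleftrightarrow> yc P"
  by (auto simp: xc_def yc_def fps_eq_iff)

lemma yc_mult: "yc P \<Longrightarrow> yc Q \<Longrightarrow> yc (P * Q)"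
  unfolding yc_def ser_mult_nth
  by (auto intro!: sum.neutral) (metis diff_is_0_eq neq0_conv not_le)

lemma yc_L1f: "set u \<subseteq> {zeta1, zeta11} \<Longrightarrow> yc (L1f u)"
proof (induction u)
  case Nil thus ?case by (auto simp: yc_def fps_one_nth)
next
  case (Cons a u)
  have "yc (Fx a)" using Cons.prems by (auto simp: yc_def fps_one_nth)
  hence "yc (Fx a * L1f u)" using Cons by (auto intro: yc_mult)
  thus ?case by (auto simp: yc_def fps_mult_left_const_nth)
qed

lemma thx_L2f_xc: "set v \<subseteq> {zeta2, zeta22} \<Longrightarrow> thx (L2f v) = 0"
  unfolding L2f_def
  by (rule thx_xc, subst xc_Tr, rule yc_L1f) (auto)

lemma thy_L1f_yc: "set v \<subseteq> {zeta1, zeta11} \<Longrightarrow> thy (L1f v) = 0"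
  by (rule thy_yc, rule yc_L1f)


lemma word_map_Nil[simp]: "word_map f [] = Some []" by (simp add: word_map_def)
lemma word_map_Cons: "word_map f (a # u) = (case f a of None \<Rightarrow> None | Some b \<Rightarrow> map_option ((#) b) (word_map f u))"
  by (cases "f a") (auto simp: word_map_def)
lemma word_map_length: "word_map f u = Some u' \<Longrightarrow> length u' = length u"
  by (auto simp: word_map_def split: if_splits)
lemma word_map_set: "word_map f u = Some u' \<Longrightarrow> x \<in> set u' \<Longrightarrow> \<exists>y. f y = Some x"
  by (auto simp: word_map_def split: if_splits) (metis option.collapse)
lemma word_map_Nil_iff: "word_map f u = Some [] \<longleftrightarrow> u = []"
  by (auto simp: word_map_def split: if_splits)

definition kt :: "(form \<Rightarrow> form option) \<Rightarrow> (form \<Rightarrow> form option) \<Rightarrow> (form list \<Rightarrow> form list \<Rightarrow> 'r::zero) \<Rightarrow> form list \<Rightarrow> nat \<Rightarrow> 'r" where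
  "kt f g X w l = (case word_map f (take l w) of None \<Rightarrow> 0 | Some u \<Rightarrow>
      (case word_map g (drop l w) of None \<Rightarrow> 0 | Some v \<Rightarrow> X u v))"

definition Kg :: "(form \<Rightarrow> form option) \<Rightarrow> (form \<Rightarrow> form option) \<Rightarrow> (form list \<Rightarrow> form list \<Rightarrow> 'r::comm_monoid_add) \<Rightarrow> form list \<Rightarrow> 'r" where
  "Kg f g X w = (\<Sum>l=0..length w. kt f g X w l)"

lemma kt_0: "kt f g X w 0 = (case word_map g w of None \<Rightarrow> 0 | Some v \<Rightarrow> X [] v)"
  by (simp add: kt_def)

lemma kt_Suc_Cons: "kt f g X (a # w) (Suc l) = (case f a of None \<Rightarrow> 0 | Some b \<Rightarrow> kt f g (\<lambda>u v. X (b # u) v) w l)"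
  by (cases "f a") (auto simp: kt_def word_map_Cons split: option.splits)

lemma Kg_Nil: "Kg f g X [] = X [] []"
  by (simp add: Kg_def kt_def)

lemma Kg_Cons: "Kg f g X (a # w) = kt f g X (a # w) 0 +
   (case f a of None \<Rightarrow> 0 | Some b \<Rightarrow> Kg f g (\<lambda>u v. X (b # u) v) w)"
proof -
  have "Kg f g X (a # w) = kt f g X (a # w) 0 + (\<Sum>l=0..length w. kt f g X (a # w) (Suc l))"
    unfolding Kg_def by (simp only: length_Cons sum.atLeast0_atMost_Suc_shift o_def)
  thus ?thesis by (cases "f a") (simp_all add: kt_Suc_Cons Kg_def)
qed

lemma Kg_theta:
  fixes \<theta> :: "'r::comm_ring_1 \<Rightarrow> 'r"
  assumes lin: "\<And>P Q. \<theta> (P + Q) = \<theta> P + \<theta> Q" "\<theta> 0 = 0"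
    and Rg: "\<And>x y. g x = Some y \<Longrightarrow> y \<in> Rg"
    and H0: "\<And>v. set v \<subseteq> Rg \<Longrightarrow> \<theta> (X [] v) = 0"
    and H1: "\<And>b u v. set v \<subseteq> Rg \<Longrightarrow> \<theta> (X (b # u) v) = F b * X u v - (if b = e \<and> u = [] then M v else 0)"
  shows "\<theta> (Kg f g X (a # w)) = (case f a of None \<Rightarrow> 0 | Some b \<Rightarrow>
      F b * Kg f g X w - (if b = e then (case word_map g w of None \<Rightarrow> 0 | Some v \<Rightarrow> M v) else 0))"
proof -
  have thsum: "\<theta> (sum h S) = (\<Sum>x\<in>S. \<theta> (h x))" for h :: "nat \<Rightarrow> 'r" and S
    by (induction S rule: infinite_finite_induct) (auto simp: lin)
  have setv: "word_map g w' = Some v \<Longrightarrow> set v \<subseteq> Rg" for w' v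
    using word_map_set[of g w' v] Rg by blast
  have t0: "\<theta> (kt f g X (a # w) 0) = 0"
    by (auto simp: kt_0 lin H0 setv split: option.splits)
  show ?thesis
  proof (cases "f a")
    case None thus ?thesis by (simp add: Kg_Cons lin t0)
  next
    case (Some b)
    have step: "\<theta> (kt f g (\<lambda>u v. X (b # u) v) w l) = F b * kt f g X w l -
        (if b = e \<and> l = 0 then (case word_map g w of None \<Rightarrow> 0 | Some v \<Rightarrow> M v) else 0)"
      if "l \<in> {0..length w}" for l
    proof (cases "word_map f (take l w)")
      case None
      hence "l \<noteq> 0" by (metis take0 word_map_Nil option.distinct(1))
      thus ?thesis using None by (simp add: kt_def lin)
    next
      case (Some u)
      have uiff: "u = [] \<longleftrightarrow> l = 0"
        using that word_map_length[OF Some] by (cases w) auto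
      show ?thesis
        using Some uiff by (auto simp: kt_def lin H1 setv split: option.splits)
    qed
    have "\<theta> (Kg f g (\<lambda>u v. X (b # u) v) w) = (\<Sum>l=0..length w. F b * kt f g X w l -
        (if b = e \<and> l = 0 then (case word_map g w of None \<Rightarrow> 0 | Some v \<Rightarrow> M v) else 0))"
      unfolding Kg_def thsum by (rule sum.cong) (auto simp: step)
    also have "\<dots> = F b * Kg f g X w - (if b = e then (case word_map g w of None \<Rightarrow> 0 | Some v \<Rightarrow> M v) else 0)"
      by (simp add: sum_subtractf Kg_def sum_distrib_left)
    finally show ?thesis using Some by (simp add: Kg_Cons lin t0)
  qed
qed


definition K12 :: "form list \<Rightarrow> ser" where "K12 = Kg pr1_12 pr2_12 (\<lambda>u v. L1f u * L2f v)"
definition K21 :: "form list \<Rightarrow> ser" where "K21 = Kg pr2_21 pr1_21 (\<lambda>u v. L2f u * L1f v)"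
definition M12 :: "form list \<Rightarrow> ser" where "M12 w = (case word_map pr2_12 w of None \<Rightarrow> 0 | Some v \<Rightarrow> L2f v)"
definition M21 :: "form list \<Rightarrow> ser" where "M21 w = (case word_map pr1_21 w of None \<Rightarrow> 0 | Some v \<Rightarrow> L1f v)"

lemma K12_Nil[simp]: "K12 [] = 1" by (simp add: K12_def Kg_Nil)
lemma K21_Nil[simp]: "K21 [] = 1" by (simp add: K21_def Kg_Nil)

lemma pr2_12_range: "pr2_12 x = Some y \<Longrightarrow> y \<in> {zeta2, zeta22}" by (cases x) auto
lemma pr1_21_range: "pr1_21 x = Some y \<Longrightarrow> y \<in> {zeta1, zeta11}" by (cases x) auto

lemma thx_K12_Cons:
  assumes "a \<in> alphA"
  shows "thx (K12 (a # w)) = Fx a * K12 w - (if a = zeta1 then M12 w else 0)"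
proof -
  have "thx (K12 (a # w)) = (case pr1_12 a of None \<Rightarrow> 0 | Some b \<Rightarrow>
      Fx b * K12 w - (if b = zeta1 then (case word_map pr2_12 w of None \<Rightarrow> 0 | Some v \<Rightarrow> L2f v) else 0))"
    unfolding K12_def
  proof (rule Kg_theta[where Rg="{zeta2, zeta22}"])
    show "\<And>v. set v \<subseteq> {zeta2, zeta22} \<Longrightarrow> thx (L1f [] * L2f v) = 0"
      by (simp add: thx_L2f_xc)
    show "\<And>b u v. set v \<subseteq> {zeta2, zeta22} \<Longrightarrow> thx (L1f (b # u) * L2f v) =
        Fx b * (L1f u * L2f v) - (if b = zeta1 \<and> u = [] then L2f v else 0)"
      by (simp add: thx_mult thx_L2f_xc thx_L1f_Cons algebra_simps del: L1f.simps)
  qed (auto dest: pr2_12_range)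
  thus ?thesis using assms by (auto simp: alphA_def M12_def)
qed

lemma thy_K21_Cons:
  assumes "a \<in> alphA"
  shows "thy (K21 (a # w)) = Gy a * K21 w - (if a = zeta2 then M21 w else 0)"
proof -
  have "thy (K21 (a # w)) = (case pr2_21 a of None \<Rightarrow> 0 | Some b \<Rightarrow>
      Gy b * K21 w - (if b = zeta2 then (case word_map pr1_21 w of None \<Rightarrow> 0 | Some v \<Rightarrow> L1f v) else 0))"
    unfolding K21_def
  proof (rule Kg_theta[where Rg="{zeta1, zeta11}"])
    show "\<And>v. set v \<subseteq> {zeta1, zeta11} \<Longrightarrow> thy (L2f [] * L1f v) = 0"
      by (simp add: thy_L1f_yc)
    show "\<And>b u v. set v \<subseteq> {zeta1, zeta11} \<Longrightarrow> thy (L2f (b # u) * L1f v) =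
        Gy b * (L2f u * L1f v) - (if b = zeta2 \<and> u = [] then L1f v else 0)"
      by (simp add: thy_mult thy_L1f_yc thy_L2f_Cons algebra_simps)
  qed (auto dest: pr1_21_range)
  thus ?thesis using assms by (auto simp: alphA_def M21_def)
qed

lemma cst_eq_0_iff[simp]: "cst c = 0 \<longleftrightarrow> c = 0"
  by (simp add: cst_def)

definition Wds :: "nat \<Rightarrow> form list set" where "Wds n = {w. set w \<subseteq> alphA \<and> length w \<le> n}"

lemma finite_alphA[simp]: "finite alphA" by (simp add: alphA_def)
lemma finite_Wds[simp]: "finite (Wds n)"
  unfolding Wds_def by (rule finite_lists_length_le) simp

lemma Wds_Suc: "Wds (Suc n) = insert [] (\<Union>a\<in>alphA. (#) a ` Wds n)"
proof
  show "Wds (Suc n) \<subseteq> insert [] (\<Union>a\<in>alphA. (#) a ` Wds n)"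
  proof
    fix w assume "w \<in> Wds (Suc n)"
    thus "w \<in> insert [] (\<Union>a\<in>alphA. (#) a ` Wds n)"
      by (cases w) (auto simp: Wds_def)
  qed
qed (auto simp: Wds_def)

lemma sum_Wds_Suc: "(\<Sum>w\<in>Wds (Suc n). h w) = h [] + (\<Sum>a\<in>alphA. \<Sum>w\<in>Wds n. h (a # w))"
proof -
  have "(\<Sum>w\<in>Wds (Suc n). h w) = h [] + (\<Sum>w\<in>(\<Union>a\<in>alphA. (#) a ` Wds n). h w)"
    unfolding Wds_Suc by (subst sum.insert) auto
  also have "(\<Sum>w\<in>(\<Union>a\<in>alphA. (#) a ` Wds n). h w) = (\<Sum>a\<in>alphA. \<Sum>w\<in>(#) a ` Wds n. h w)"
    by (rule sum.UNION_disjoint) auto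
  also have "\<dots> = (\<Sum>a\<in>alphA. \<Sum>w\<in>Wds n. h (a # w))"
    by (rule sum.cong[OF refl], subst sum.reindex) (auto simp: inj_on_def)
  finally show ?thesis .
qed

definition GK :: "(form list \<Rightarrow> ser) \<Rightarrow> nat \<Rightarrow> (form list \<Rightarrow> complex) \<Rightarrow> ser" where
  "GK K n \<phi> = (\<Sum>w\<in>Wds n. cst (\<phi> w) * K w)"

definition bnd :: "(form list \<Rightarrow> complex) \<Rightarrow> nat \<Rightarrow> bool" where
  "bnd \<phi> n \<longleftrightarrow> (\<forall>w. \<phi> w \<noteq> 0 \<longrightarrow> set w \<subseteq> alphA \<and> length w \<le> n)"

definition sh :: "(form list \<Rightarrow> complex) \<Rightarrow> form \<Rightarrow> form list \<Rightarrow> complex" where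
  "sh \<phi> a = (\<lambda>w. \<phi> (a # w))"

lemma bnd_sh: "bnd \<phi> (Suc n) \<Longrightarrow> bnd (sh \<phi> a) n"
  unfolding bnd_def sh_def
proof (intro allI impI)
  fix w assume H: "\<forall>w. \<phi> w \<noteq> 0 \<longrightarrow> set w \<subseteq> alphA \<and> length w \<le> Suc n" and "\<phi> (a # w) \<noteq> 0"
  hence "set (a # w) \<subseteq> alphA \<and> length (a # w) \<le> Suc n" by blast
  thus "set w \<subseteq> alphA \<and> length w \<le> n" by auto
qed

lemma GK_mono: "bnd \<phi> n \<Longrightarrow> n \<le> m \<Longrightarrow> GK K m \<phi> = GK K n \<phi>"
  unfolding GK_def
proof (rule sum.mono_neutral_right)
  assume "bnd \<phi> n" "n \<le> m"
  thus "Wds n \<subseteq> Wds m" by (auto simp: Wds_def)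
  show "\<forall>i\<in>Wds m - Wds n. cst (\<phi> i) * K i = 0"
    using \<open>bnd \<phi> n\<close> by (auto simp: Wds_def bnd_def)
qed simp

lemma GK_Suc: "GK K (Suc n) \<phi> = cst (\<phi> []) * K [] + (\<Sum>a\<in>alphA. \<Sum>w\<in>Wds n. cst (\<phi> (a # w)) * K (a # w))"
  unfolding GK_def by (rule sum_Wds_Suc)

definition brk :: "(form list \<Rightarrow> complex) \<Rightarrow> form list \<Rightarrow> form list \<Rightarrow> bool" where
  "brk \<phi> p q \<longleftrightarrow> (let d = (\<lambda>a b. \<phi> (p @ a # b # q) - \<phi> (p @ b # a # q)) in
     d zeta1 zeta2 = 0 \<and> d zeta1 zeta22 = 0 \<and> d zeta11 zeta2 = 0 \<and>
     d zeta1 zeta12 - d zeta2 zeta12 + d zeta11 zeta22 = 0 \<and>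
     d zeta11 zeta12 + d zeta11 zeta22 = 0 \<and> d zeta11 zeta22 - d zeta22 zeta12 = 0)"

definition Good :: "(form list \<Rightarrow> complex) \<Rightarrow> bool" where
  "Good \<phi> \<longleftrightarrow> (\<forall>p. \<phi> (p @ [zeta1]) = 0 \<and> \<phi> (p @ [zeta2]) = 0) \<and> (\<forall>p q. brk \<phi> p q)"

lemma Good_sh: "Good \<phi> \<Longrightarrow> Good (sh \<phi> a)"
  unfolding Good_def brk_def sh_def Let_def
  by (metis append_Cons)

lemma C1: "Good \<phi> \<Longrightarrow> set q \<subseteq> {zeta2, zeta22} \<Longrightarrow> \<phi> (p @ zeta1 # q) = 0"
proof (induction q arbitrary: p)
  case Nil thus ?case by (simp add: Good_def)
next
  case (Cons b q)
  have "brk \<phi> p q" using Cons.prems by (simp add: Good_def)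
  hence "\<phi> (p @ zeta1 # b # q) = \<phi> (p @ b # zeta1 # q)"
    using Cons.prems by (auto simp: brk_def Let_def)
  also have "\<dots> = \<phi> ((p @ [b]) @ zeta1 # q)" by simp
  also have "\<dots> = 0" using Cons.IH[of "p @ [b]"] Cons.prems by simp
  finally show ?case .
qed

lemma C2: "Good \<phi> \<Longrightarrow> set q \<subseteq> {zeta1, zeta11} \<Longrightarrow> \<phi> (p @ zeta2 # q) = 0"
proof (induction q arbitrary: p)
  case Nil thus ?case by (simp add: Good_def)
next
  case (Cons b q)
  have "brk \<phi> p q" using Cons.prems by (simp add: Good_def)
  hence "\<phi> (p @ zeta2 # b # q) = \<phi> (p @ b # zeta2 # q)"
    using Cons.prems by (auto simp: brk_def Let_def)
  also have "\<dots> = \<phi> ((p @ [b]) @ zeta2 # q)" by simp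
  also have "\<dots> = 0" using Cons.IH[of "p @ [b]"] Cons.prems by simp
  finally show ?case .
qed



lemma wedge_formal:
  assumes "brk \<phi> p q"
  shows "(\<Sum>a\<in>alphA. \<Sum>b\<in>alphA. cst (\<phi> (p @ a # b # q)) * (Fx a * Gy b - Gy a * Fx b)) = 0"
proof -
  define c where "c a b = \<phi> (p @ a # b # q)" for a b
  define d where "d a b = c a b - c b a" for a b
  have r: "d zeta1 zeta2 = 0" "d zeta1 zeta22 = 0" "d zeta11 zeta2 = 0"
     "d zeta1 zeta12 - d zeta2 zeta12 + d zeta11 zeta22 = 0"
     "d zeta11 zeta12 + d zeta11 zeta22 = 0" "d zeta11 zeta22 - d zeta22 zeta12 = 0"
    using assms unfolding brk_def Let_def d_def c_def by blast+
  have "(\<Sum>a\<in>alphA. \<Sum>b\<in>alphA. cst (\<phi> (p @ a # b # q)) * (Fx a * Gy b - Gy a * Fx b)) =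
     cst (d zeta1 zeta2) + cst (d zeta1 zeta22) * Bser + cst (d zeta11 zeta2) * Aser
     + cst (d zeta1 zeta12 - d zeta2 zeta12 + d zeta11 zeta22) * Cser
     + cst (d zeta11 zeta12 + d zeta11 zeta22) * Aser * Cser
     + cst (d zeta11 zeta22 - d zeta22 zeta12) * Bser * Cser
     + cst (d zeta11 zeta22) * (Aser * Bser - Cser - Aser * Cser - Bser * Cser)"
    unfolding c_def[symmetric] d_def
    by (simp add: alphA_def cst_diff cst_add algebra_simps)
  also have "\<dots> = 0" by (simp add: r ABC)
  finally show ?thesis .
qed



lemma closed_F_G: "a \<in> alphA \<Longrightarrow> thy (Fx a) = thx (Gy a)"
proof -
  have "thy Aser = 0" by (rule ser_eqI) simp
  moreover have "thx Bser = 0" unfolding Bser_def thx_Tr by (simp add: \<open>thy Aser = 0\<close>)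
  moreover have "thy Cser = thx Cser"
    by (rule ser_eqI) (auto simp: fps_X_power_nth)
  ultimately show "a \<in> alphA \<Longrightarrow> thy (Fx a) = thx (Gy a)"
    by (auto simp: alphA_def)
qed

lemma thx_cst_mult: "thx (cst c * P) = cst c * thx P" by (simp add: thx_mult)
lemma thy_cst_mult: "thy (cst c * P) = cst c * thy P" by (simp add: thy_mult)

lemma word_map_dom: "word_map f w = Some v \<Longrightarrow> x \<in> set w \<Longrightarrow> f x \<noteq> None"
  by (auto simp: word_map_def split: if_splits)

lemma M12_zero:
  assumes "Good \<phi>"
  shows "cst (\<phi> (zeta1 # w)) * M12 w = 0"
proof (cases "word_map pr2_12 w")
  case None thus ?thesis by (simp add: M12_def)
next
  case (Some v)
  have "set w \<subseteq> {zeta2, zeta22}"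
  proof
    fix x assume "x \<in> set w"
    hence "pr2_12 x \<noteq> None" using word_map_dom[OF Some] by blast
    thus "x \<in> {zeta2, zeta22}" by (cases x) auto
  qed
  hence "\<phi> ([] @ zeta1 # w) = 0" by (rule C1[OF assms])
  thus ?thesis by simp
qed

lemma M21_zero:
  assumes "Good \<phi>"
  shows "cst (\<phi> (zeta2 # w)) * M21 w = 0"
proof (cases "word_map pr1_21 w")
  case None thus ?thesis by (simp add: M21_def)
next
  case (Some v)
  have "set w \<subseteq> {zeta1, zeta11}"
  proof
    fix x assume "x \<in> set w"
    hence "pr1_21 x \<noteq> None" using word_map_dom[OF Some] by blast
    thus "x \<in> {zeta1, zeta11}" by (cases x) auto
  qed
  hence "\<phi> ([] @ zeta2 # w) = 0" by (rule C2[OF assms])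
  thus ?thesis by simp
qed

lemma zeta1_alphA[simp]: "zeta1 \<in> alphA" and zeta2_alphA[simp]: "zeta2 \<in> alphA"
  by (auto simp: alphA_def)

lemma LX_Suc:
  assumes "Good \<phi>"
  shows "thx (GK K12 (Suc n) \<phi>) = (\<Sum>a\<in>alphA. Fx a * GK K12 n (sh \<phi> a))"
proof -
  have "thx (GK K12 (Suc n) \<phi>) = (\<Sum>a\<in>alphA. \<Sum>w\<in>Wds n. cst (\<phi> (a # w)) * thx (K12 (a # w)))"
    by (simp add: GK_Suc thx_sum thx_cst_mult)
  also have "\<dots> = (\<Sum>a\<in>alphA. \<Sum>w\<in>Wds n. cst (\<phi> (a # w)) * (Fx a * K12 w)
        - (if a = zeta1 then cst (\<phi> (zeta1 # w)) * M12 w else 0))"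
    by (intro sum.cong refl) (auto simp: thx_K12_Cons algebra_simps)
  also have "\<dots> = (\<Sum>a\<in>alphA. \<Sum>w\<in>Wds n. cst (\<phi> (a # w)) * (Fx a * K12 w))"
    by (intro sum.cong refl) (auto simp: M12_zero[OF assms])
  also have "\<dots> = (\<Sum>a\<in>alphA. Fx a * GK K12 n (sh \<phi> a))"
    by (simp add: GK_def sh_def sum_distrib_left algebra_simps)
  finally show ?thesis .
qed

lemma LY_Suc:
  assumes "Good \<phi>"
  shows "thy (GK K21 (Suc n) \<phi>) = (\<Sum>a\<in>alphA. Gy a * GK K21 n (sh \<phi> a))"
proof -
  have "thy (GK K21 (Suc n) \<phi>) = (\<Sum>a\<in>alphA. \<Sum>w\<in>Wds n. cst (\<phi> (a # w)) * thy (K21 (a # w)))"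
    by (simp add: GK_Suc thy_sum thy_cst_mult)
  also have "\<dots> = (\<Sum>a\<in>alphA. \<Sum>w\<in>Wds n. cst (\<phi> (a # w)) * (Gy a * K21 w)
        - (if a = zeta2 then cst (\<phi> (zeta2 # w)) * M21 w else 0))"
    by (intro sum.cong refl) (auto simp: thy_K21_Cons algebra_simps)
  also have "\<dots> = (\<Sum>a\<in>alphA. \<Sum>w\<in>Wds n. cst (\<phi> (a # w)) * (Gy a * K21 w))"
    by (intro sum.cong refl) (auto simp: M21_zero[OF assms])
  also have "\<dots> = (\<Sum>a\<in>alphA. Gy a * GK K21 n (sh \<phi> a))"
    by (simp add: GK_def sh_def sum_distrib_left algebra_simps)
  finally show ?thesis .
qed

lemma LX:
  assumes "Good \<phi>" "bnd \<phi> n"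
  shows "thx (GK K12 n \<phi>) = (\<Sum>a\<in>alphA. Fx a * GK K12 n (sh \<phi> a))"
proof -
  have "GK K12 n \<phi> = GK K12 (Suc n) \<phi>" using GK_mono[OF assms(2), of "Suc n"] by simp
  thus ?thesis using LX_Suc[OF assms(1)] by simp
qed

lemma LY:
  assumes "Good \<phi>" "bnd \<phi> n"
  shows "thy (GK K21 n \<phi>) = (\<Sum>a\<in>alphA. Gy a * GK K21 n (sh \<phi> a))"
proof -
  have "GK K21 n \<phi> = GK K21 (Suc n) \<phi>" using GK_mono[OF assms(2), of "Suc n"] by simp
  thus ?thesis using LY_Suc[OF assms(1)] by simp
qed



lemma mult_nth0: "(P * Q) $ 0 = P $ 0 * Q $ 0"
  by (simp add: fps_mult_nth)

lemma sum_only0: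
  fixes m :: nat
  assumes "\<And>l. l \<in> {0..m} \<Longrightarrow> l \<noteq> 0 \<Longrightarrow> f l = (0::'a::comm_monoid_add)"
  shows "(\<Sum>l=0..m. f l) = f 0"
proof -
  have "(\<Sum>l=0..m. f l) = (\<Sum>l\<in>{0}. f l)"
    by (rule sum.mono_neutral_right) (use assms in auto)
  thus ?thesis by simp
qed

lemma sum_onlym:
  fixes m :: nat
  assumes "\<And>l. l \<in> {0..m} \<Longrightarrow> l \<noteq> m \<Longrightarrow> f l = (0::'a::comm_monoid_add)"
  shows "(\<Sum>l=0..m. f l) = f m"
proof -
  have "(\<Sum>l=0..m. f l) = (\<Sum>l\<in>{m}. f l)"
    by (rule sum.mono_neutral_right) (use assms in auto)
  thus ?thesis by simp
qed

lemma K12_nth0: "K12 w $ 0 = M12 w $ 0"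
proof -
  have "K12 w $ 0 = (\<Sum>l=0..length w. kt pr1_12 pr2_12 (\<lambda>u v. L1f u * L2f v) w l $ 0)"
    by (simp add: K12_def Kg_def fps_sum_nth)
  also have "\<dots> = kt pr1_12 pr2_12 (\<lambda>u v. L1f u * L2f v) w 0 $ 0"
  proof (rule sum_only0)
    fix l assume l: "l \<in> {0..length w}" "l \<noteq> 0"
    show "kt pr1_12 pr2_12 (\<lambda>u v. L1f u * L2f v) w l $ 0 = 0"
    proof (cases "word_map pr1_12 (take l w)")
      case (Some u)
      have "u \<noteq> []" using word_map_length[OF Some] l by auto
      thus ?thesis using Some by (auto simp: kt_def mult_nth0 L1f_nth0 split: option.splits)
    qed (simp add: kt_def)
  qed
  also have "\<dots> = M12 w $ 0"
    by (auto simp: kt_0 M12_def split: option.splits)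
  finally show ?thesis .
qed

lemma cst_mult_nth0: "(cst c * P) $ 0 = fps_const c * P $ 0"
  by (simp add: mult_nth0 cst_def)

lemma Z0: "GK K12 n \<phi> $ 0 = GK M12 n \<phi> $ 0"
  by (simp add: GK_def fps_sum_nth cst_mult_nth0 K12_nth0)

lemma thyM:
  assumes "a \<in> alphA"
  shows "thy (M12 (a # w)) = (if a \<in> {zeta2, zeta22} then Gy a * M12 w - (if a = zeta2 \<and> w = [] then 1 else 0) else 0)"
proof (cases "a \<in> {zeta2, zeta22}")
  case True
  hence pa: "pr2_12 a = Some a" by auto
  show ?thesis
  proof (cases "word_map pr2_12 w")
    case None
    hence "w \<noteq> []" by auto
    thus ?thesis using True None pa by (simp add: M12_def word_map_Cons)
  next
    case (Some v)
    have "v = [] \<longleftrightarrow> w = []" using word_map_length[OF Some] by auto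
    thus ?thesis using True Some pa by (simp add: M12_def word_map_Cons thy_L2f_Cons)
  qed
next
  case False
  hence "pr2_12 a = None" by (cases a) auto
  thus ?thesis using False by (simp add: M12_def word_map_Cons)
qed

lemma M12_Nil[simp]: "M12 [] = 1" by (simp add: M12_def)

lemma Nil_Wds[simp]: "[] \<in> Wds n" by (simp add: Wds_def)

lemma thy_GKM:
  assumes "Good \<phi>"
  shows "thy (GK M12 (Suc n) \<phi>) = (\<Sum>a\<in>alphA. if a \<in> {zeta2, zeta22} then Gy a * GK M12 n (sh \<phi> a) else 0)"
proof -
  have z: "\<phi> [zeta2] = 0" using assms unfolding Good_def by (metis append_Nil)
  have "thy (GK M12 (Suc n) \<phi>) = (\<Sum>a\<in>alphA. \<Sum>w\<in>Wds n. cst (\<phi> (a # w)) * thy (M12 (a # w)))"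
    by (simp add: GK_Suc thy_sum thy_cst_mult)
  also have "\<dots> = (\<Sum>a\<in>alphA. \<Sum>w\<in>Wds n. if a \<in> {zeta2, zeta22} then Gy a * (cst (\<phi> (a # w)) * M12 w) else 0)"
    by (intro sum.cong refl) (auto simp: thyM z algebra_simps)
  also have "\<dots> = (\<Sum>a\<in>alphA. if a \<in> {zeta2, zeta22} then Gy a * GK M12 n (sh \<phi> a) else 0)"
    by (intro sum.cong refl) (auto simp: GK_def sh_def sum_distrib_left)
  finally show ?thesis .
qed

lemma Gy_nth0: "a \<in> alphA \<Longrightarrow> a \<notin> {zeta2, zeta22} \<Longrightarrow> Gy a $ 0 = 0"
  by (auto simp: alphA_def)

lemma bnd0_sh: "bnd \<phi> 0 \<Longrightarrow> sh \<phi> a = (\<lambda>_. 0)"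
  by (auto simp: bnd_def sh_def fun_eq_iff)

lemma GK_zero[simp]: "GK K n (\<lambda>_. 0) = 0" by (simp add: GK_def)

lemma Wds_0: "Wds 0 = {[]}" by (auto simp: Wds_def)

lemma GK_0: "GK K 0 \<phi> = cst (\<phi> []) * K []" by (simp add: GK_def Wds_0)

lemma thy_K12_Nil: "thy (K12 []) = 0" by simp

lemma GC:
  assumes "Good \<phi>" "bnd \<phi> n"
  shows "thy (GK K12 n \<phi>) = (\<Sum>a\<in>alphA. Gy a * GK K12 n (sh \<phi> a))"
  using assms
proof (induction n arbitrary: \<phi>)
  case 0
  thus ?case by (simp add: GK_0 bnd0_sh thy_cst_mult)
next
  case (Suc n \<phi>)
  note G = Suc.prems(1) and B = Suc.prems(2)
  define \<Phi> where "\<Phi> = GK K12 (Suc n) \<phi>"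
  define \<Psi> where "\<Psi> a = GK K12 n (sh \<phi> a)" for a
  define P where "P a b = GK K12 n (sh (sh \<phi> a) b)" for a b
  have bsh: "bnd (sh \<phi> a) n" for a using bnd_sh[OF B] .
  have Gsh: "Good (sh \<phi> a)" for a using Good_sh[OF G] .
  have Psi_eq: "GK K12 (Suc n) (sh \<phi> a) = \<Psi> a" for a
    unfolding \<Psi>_def by (rule GK_mono[OF bsh]) simp
  have IH: "thy (\<Psi> a) = (\<Sum>b\<in>alphA. Gy b * P a b)" for a
    unfolding \<Psi>_def P_def by (rule Suc.IH[OF Gsh bsh])
  have LXa: "thx (\<Psi> a) = (\<Sum>b\<in>alphA. Fx b * P a b)" for a
    unfolding \<Psi>_def P_def by (rule LX[OF Gsh bsh])
  have LX0: "thx \<Phi> = (\<Sum>a\<in>alphA. Fx a * \<Psi> a)"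
    unfolding \<Phi>_def \<Psi>_def by (rule LX_Suc[OF G])
  define E where "E = thy \<Phi> - (\<Sum>a\<in>alphA. Gy a * \<Psi> a)"
  have "thx E = thy (thx \<Phi>) - (\<Sum>a\<in>alphA. thx (Gy a) * \<Psi> a + Gy a * thx (\<Psi> a))"
    by (simp add: E_def thx_thy thx_sum thx_mult)
  also have "\<dots> = (\<Sum>a\<in>alphA. thy (Fx a) * \<Psi> a + Fx a * thy (\<Psi> a)) -
      (\<Sum>a\<in>alphA. thx (Gy a) * \<Psi> a + Gy a * thx (\<Psi> a))"
    by (simp add: LX0 thy_sum thy_mult)
  also have "\<dots> = (\<Sum>a\<in>alphA. Fx a * thy (\<Psi> a) - Gy a * thx (\<Psi> a))"
    by (simp add: sum_subtractf[symmetric] closed_F_G cong: sum.cong)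
  also have "\<dots> = (\<Sum>a\<in>alphA. \<Sum>b\<in>alphA. (Fx a * Gy b - Gy a * Fx b) * P a b)"
    by (simp add: IH LXa sum_distrib_left sum_subtractf[symmetric] algebra_simps)
  also have "\<dots> = (\<Sum>w\<in>Wds n. (\<Sum>a\<in>alphA. \<Sum>b\<in>alphA. cst (\<phi> ([] @ a # b # w)) * (Fx a * Gy b - Gy a * Fx b)) * K12 w)"
    by (simp add: P_def GK_def sh_def sum_distrib_left sum_distrib_right algebra_simps sum.swap[of _ "Wds n"])
  also have "\<dots> = 0"
  proof (rule sum.neutral, rule ballI)
    fix w
    have "brk \<phi> [] w" using G by (simp add: Good_def)
    from wedge_formal[OF this] show "(\<Sum>a\<in>alphA. \<Sum>b\<in>alphA. cst (\<phi> ([] @ a # b # w)) * (Fx a * Gy b - Gy a * Fx b)) * K12 w = 0"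
      by simp
  qed
  finally have thxE: "thx E = 0" .
  have E0: "E $ 0 = 0"
  proof -
    have "thy \<Phi> $ 0 = thy (GK M12 (Suc n) \<phi>) $ 0"
      by (simp add: \<Phi>_def Z0)
    also have "\<dots> = (\<Sum>a\<in>alphA. if a \<in> {zeta2, zeta22} then Gy a $ 0 * GK M12 n (sh \<phi> a) $ 0 else 0)"
      unfolding thy_GKM[OF G] fps_sum_nth by (intro sum.cong refl) (simp add: mult_nth0)
    also have "\<dots> = (\<Sum>a\<in>alphA. Gy a $ 0 * \<Psi> a $ 0)"
      by (intro sum.cong refl) (auto simp: Gy_nth0 \<Psi>_def Z0)
    also have "\<dots> = (\<Sum>a\<in>alphA. Gy a * \<Psi> a) $ 0"
      by (simp add: fps_sum_nth mult_nth0)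
    finally show ?thesis by (simp add: E_def)
  qed
  have "E = 0"
  proof (rule fps_ext)
    fix i
    show "E $ i = 0 $ i"
    proof (cases "i = 0")
      case True thus ?thesis using E0 by simp
    next
      case False
      have "thx E $ i = of_nat i * E $ i" by simp
      hence "of_nat i * E $ i = 0" using thxE by simp
      moreover have "(of_nat i :: complex fps) \<noteq> 0"
        using False by (metis fps_of_nat fps_nth_fps_const of_nat_eq_0_iff)
      ultimately show ?thesis by simp
    qed
  qed
  thus ?case by (simp add: E_def \<Phi>_def Psi_eq)
qed



definition r0 :: "ser \<Rightarrow> complex fps" where "r0 P = Abs_fps (\<lambda>i. P $ i $ 0)"
definition J1 :: "complex fps \<Rightarrow> complex fps" where
  "J1 p = Abs_fps (\<lambda>i. if i = 0 then 0 else p $ i / of_nat i)"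

lemma r0_nth[simp]: "r0 P $ i = P $ i $ 0" by (simp add: r0_def)
lemma r0_add[simp]: "r0 (P + Q) = r0 P + r0 Q" by (rule fps_ext) simp
lemma r0_diff[simp]: "r0 (P - Q) = r0 P - r0 Q" by (rule fps_ext) simp
lemma r0_zero[simp]: "r0 0 = 0" by (rule fps_ext) simp
lemma r0_mult[simp]: "r0 (P * Q) = r0 P * r0 Q"
  by (rule fps_ext) (simp add: fps_mult_nth fps_sum_nth mult_nth0)
lemma r0_cst[simp]: "r0 (cst c) = fps_const c"
  by (rule fps_ext) (simp add: cst_def)
lemma r0_sum: "r0 (sum f S) = (\<Sum>x\<in>S. r0 (f x))"
  by (induction S rule: infinite_finite_induct) auto
lemma r0_Jx: "r0 (Jx P) = J1 (r0 P)"
  by (rule fps_ext) (simp add: J1_def)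
lemma J1_0[simp]: "J1 0 = 0" by (rule fps_ext) (simp add: J1_def)
lemma r0_Cser[simp]: "r0 Cser = 0" by (rule fps_ext) simp

lemma r0_L1f_12: "zeta12_1 \<in> set u \<Longrightarrow> r0 (L1f u) = 0"
  by (induction u) (auto simp: r0_Jx)

lemma r0_L2f_Cons: "r0 (L2f (a # v)) = 0"
  by (rule fps_ext) (simp add: L2f_def)

lemma r0_one[simp]: "r0 1 = 1" by (rule fps_ext) (simp add: fps_one_nth)

lemma r0_L2f: "r0 (L2f v) = (if v = [] then 1 else 0)"
  by (cases v) (auto simp: r0_L2f_Cons)

definition R0 :: "form list \<Rightarrow> complex fps" where
  "R0 w = (case word_map pr1_21 w of None \<Rightarrow> 0 | Some v \<Rightarrow> r0 (L1f v))"

lemma La: "word_map pr1_21 w = Some v \<Longrightarrow> word_map pr1_12 w = Some v"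
proof (induction w arbitrary: v)
  case (Cons a w)
  thus ?case by (cases a) (auto simp: word_map_Cons split: option.splits)
qed simp

lemma Lb: "word_map pr1_12 w = Some u \<Longrightarrow> word_map pr1_21 w = None \<Longrightarrow> zeta12_1 \<in> set u"
proof (induction w arbitrary: u)
  case (Cons a w)
  thus ?case by (cases a) (auto simp: word_map_Cons split: option.splits)
qed simp

lemma r0_K12: "r0 (K12 w) = R0 w"
proof -
  have "r0 (K12 w) = (\<Sum>l=0..length w. r0 (kt pr1_12 pr2_12 (\<lambda>u v. L1f u * L2f v) w l))"
    by (simp add: K12_def Kg_def r0_sum)
  also have "\<dots> = r0 (kt pr1_12 pr2_12 (\<lambda>u v. L1f u * L2f v) w (length w))"
  proof (rule sum_onlym)
    fix l assume l: "l \<in> {0..length w}" "l \<noteq> length w"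
    show "r0 (kt pr1_12 pr2_12 (\<lambda>u v. L1f u * L2f v) w l) = 0"
    proof (cases "word_map pr2_12 (drop l w)")
      case (Some v)
      have "v \<noteq> []" using word_map_length[OF Some] l by auto
      thus ?thesis using Some by (auto simp: kt_def r0_L2f split: option.splits)
    qed (auto simp: kt_def split: option.splits)
  qed
  also have "\<dots> = (case word_map pr1_12 w of None \<Rightarrow> 0 | Some u \<Rightarrow> r0 (L1f u))"
    by (auto simp: kt_def r0_L2f split: option.splits)
  also have "\<dots> = R0 w"
  proof (cases "word_map pr1_21 w")
    case None
    thus ?thesis by (auto simp: R0_def r0_L1f_12 dest: Lb split: option.splits)
  next
    case (Some v)
    thus ?thesis by (simp add: R0_def La)
  qed
  finally show ?thesis .
qed

lemma r0_K21: "r0 (K21 w) = R0 w"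
proof -
  have "r0 (K21 w) = (\<Sum>l=0..length w. r0 (kt pr2_21 pr1_21 (\<lambda>u v. L2f u * L1f v) w l))"
    by (simp add: K21_def Kg_def r0_sum)
  also have "\<dots> = r0 (kt pr2_21 pr1_21 (\<lambda>u v. L2f u * L1f v) w 0)"
  proof (rule sum_only0)
    fix l assume l: "l \<in> {0..length w}" "l \<noteq> 0"
    show "r0 (kt pr2_21 pr1_21 (\<lambda>u v. L2f u * L1f v) w l) = 0"
    proof (cases "word_map pr2_21 (take l w)")
      case (Some u)
      have "u \<noteq> []" using word_map_length[OF Some] l by auto
      thus ?thesis using Some by (auto simp: kt_def r0_L2f split: option.splits)
    qed (auto simp: kt_def split: option.splits)
  qed
  also have "\<dots> = R0 w"
    by (auto simp: kt_0 R0_def split: option.splits)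
  finally show ?thesis .
qed

lemma r0_GK: "r0 (GK K12 n \<phi>) = r0 (GK K21 n \<phi>)"
  by (simp add: GK_def r0_sum r0_K12 r0_K21)

lemma main_formal:
  assumes "Good \<phi>" "bnd \<phi> n"
  shows "GK K12 n \<phi> = GK K21 n \<phi>"
  using assms
proof (induction n arbitrary: \<phi>)
  case (0 \<phi>)
  thus ?case by (simp add: GK_0)
next
  case (Suc n \<phi>)
  note G = Suc.prems(1) and B = Suc.prems(2)
  have eqa: "GK K12 (Suc n) (sh \<phi> a) = GK K21 (Suc n) (sh \<phi> a)" for a
  proof -
    have b: "bnd (sh \<phi> a) n" by (rule bnd_sh[OF B])
    have "GK K12 (Suc n) (sh \<phi> a) = GK K12 n (sh \<phi> a)" by (rule GK_mono[OF b]) simp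
    also have "\<dots> = GK K21 n (sh \<phi> a)" by (rule Suc.IH[OF Good_sh[OF G] b])
    also have "\<dots> = GK K21 (Suc n) (sh \<phi> a)" by (rule GK_mono[OF b, symmetric]) simp
    finally show ?thesis .
  qed
  define H where "H = GK K12 (Suc n) \<phi> - GK K21 (Suc n) \<phi>"
  have thyH: "thy H = 0"
    by (simp add: H_def GC[OF G B] LY[OF G B] eqa)
  have r0H: "r0 H = 0" by (simp add: H_def r0_GK)
  have "H = 0"
  proof (rule ser_eqI)
    fix i j
    show "H $ i $ j = 0 $ i $ j"
    proof (cases "j = 0")
      case True
      have "r0 H $ i = 0" using r0H by simp
      thus ?thesis using True by simp
    next
      case False
      have "thy H $ i $ j = of_nat j * H $ i $ j" by simp
      hence "of_nat j * H $ i $ j = 0" using thyH by simp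
      thus ?thesis using False by simp
    qed
  qed
  thus ?case by (simp add: H_def)
qed



lemma isolate:
  fixes c :: "form list \<Rightarrow> complex" and \<Psi> :: "form list \<Rightarrow> complex \<times> complex \<Rightarrow> complex"
    and lam :: "form \<Rightarrow> nat \<Rightarrow> complex" and kk :: "nat \<Rightarrow> bool" and pp :: "nat \<Rightarrow> complex \<times> complex"
  assumes finW: "finite W" and finJ: "finite J" and mJ: "m \<notin> J"
    and alph: "\<And>w j. w \<in> W \<Longrightarrow> j \<in> J \<Longrightarrow> w ! j \<in> alphA"
    and talph: "\<And>j. j \<in> J \<Longrightarrow> t ! j \<in> alphA"
    and dual: "\<And>e a. e \<in> alphA \<Longrightarrow> a \<in> alphA \<Longrightarrow> (\<Sum>i<N. lam e i * coef a (kk i) (pp i)) = (if a = e then 1 else 0)"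
    and ppd: "\<And>i. pp i \<in> dom2"
    and H: "\<And>ks ps. (\<forall>j. ps j \<in> dom2) \<Longrightarrow>
        (\<Sum>w\<in>W. c w * \<Psi> w (ps m) * (\<Prod>j\<in>J. coef (w ! j) (ks j) (ps j))) = 0"
  shows "J' \<subseteq> J \<Longrightarrow> (\<forall>j. ps j \<in> dom2) \<Longrightarrow>
     (\<Sum>w\<in>{w\<in>W. \<forall>j\<in>J'. w ! j = t ! j}. c w * \<Psi> w (ps m) * (\<Prod>j\<in>J - J'. coef (w ! j) (ks j) (ps j))) = 0"
proof (induction J' arbitrary: ks ps rule: infinite_finite_induct)
  case (infinite A)
  thus ?case using finJ by (meson finite_subset)
next
  case empty
  thus ?case using H by simp
next
  case (insert j0 J' ks ps)
  have j0J: "j0 \<in> J" and J'J: "J' \<subseteq> J" using insert.prems by auto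
  define e where "e = t ! j0"
  have eA: "e \<in> alphA" using talph j0J by (simp add: e_def)
  define WJ where "WJ = {w\<in>W. \<forall>j\<in>J'. w ! j = t ! j}"
  have finWJ: "finite WJ" using finW by (simp add: WJ_def)
  define Pr where "Pr w = (\<Prod>j\<in>J - insert j0 J'. coef (w ! j) (ks j) (ps j))" for w
  have split: "(\<Prod>j\<in>J - J'. coef (w ! j) (ks' j) (ps' j)) = coef (w ! j0) (ks' j0) (ps' j0) * Pr w"
    if "\<And>j. j \<noteq> j0 \<Longrightarrow> ks' j = ks j \<and> ps' j = ps j" for w ks' ps'
  proof -
    have eq: "J - J' = insert j0 (J - insert j0 J')" using j0J insert.hyps by auto
    have "(\<Prod>j\<in>J - J'. coef (w ! j) (ks' j) (ps' j)) =
        (\<Prod>j\<in>insert j0 (J - insert j0 J'). coef (w ! j) (ks' j) (ps' j))"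
      by (simp only: eq)
    also have "\<dots> = coef (w ! j0) (ks' j0) (ps' j0) * (\<Prod>j\<in>J - insert j0 J'. coef (w ! j) (ks' j) (ps' j))"
      by (rule prod.insert) (use finJ in auto)
    also have "(\<Prod>j\<in>J - insert j0 J'. coef (w ! j) (ks' j) (ps' j)) = Pr w"
      unfolding Pr_def by (rule prod.cong) (use that in auto)
    finally show ?thesis .
  qed
  have zero: "(\<Sum>w\<in>WJ. c w * \<Psi> w (ps m) * (coef (w ! j0) (kk i) (pp i) * Pr w)) = 0" for i
  proof -
    have "(\<Sum>w\<in>WJ. c w * \<Psi> w ((ps(j0 := pp i)) m) * (\<Prod>j\<in>J - J'. coef (w ! j) ((ks(j0 := kk i)) j) ((ps(j0 := pp i)) j))) = 0"
      unfolding WJ_def by (rule insert.IH) (use J'J insert.prems ppd in auto)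
    moreover have "(ps(j0 := pp i)) m = ps m" using mJ j0J by auto
    ultimately show ?thesis
      using split[of "ks(j0 := kk i)" "ps(j0 := pp i)"] by simp
  qed
  have "0 = (\<Sum>i<N. lam e i * (\<Sum>w\<in>WJ. c w * \<Psi> w (ps m) * (coef (w ! j0) (kk i) (pp i) * Pr w)))"
    by (simp add: zero)
  also have "\<dots> = (\<Sum>w\<in>WJ. c w * \<Psi> w (ps m) * Pr w * (\<Sum>i<N. lam e i * coef (w ! j0) (kk i) (pp i)))"
    by (simp add: sum_distrib_left sum_distrib_right mult_ac sum.swap[of _ "{..<N}"])
  also have "\<dots> = (\<Sum>w\<in>WJ. if w ! j0 = e then c w * \<Psi> w (ps m) * Pr w else 0)"
  proof (rule sum.cong[OF refl])
    fix w assume "w \<in> WJ"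
    hence "w ! j0 \<in> alphA" using alph j0J by (auto simp: WJ_def)
    thus "c w * \<Psi> w (ps m) * Pr w * (\<Sum>i<N. lam e i * coef (w ! j0) (kk i) (pp i)) =
        (if w ! j0 = e then c w * \<Psi> w (ps m) * Pr w else 0)"
      by (simp add: dual[OF eA])
  qed
  also have "\<dots> = (\<Sum>w\<in>{w\<in>WJ. w ! j0 = e}. c w * \<Psi> w (ps m) * Pr w)"
    using finWJ by (simp add: sum.inter_filter)
  also have "{w\<in>WJ. w ! j0 = e} = {w\<in>W. \<forall>j\<in>insert j0 J'. w ! j = t ! j}"
    by (auto simp: WJ_def e_def)
  finally show ?case by (simp add: Pr_def)
qed



definition kk :: "nat \<Rightarrow> bool" where "kk i = (3 \<le> i)"
definition pp :: "nat \<Rightarrow> complex \<times> complex" where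
  "pp i = (if i = 0 then (-1, 2) else if i = 1 then (2, 2) else if i = 2 then (-1, -2)
           else if i = 3 then (-1, 3) else (2, 2))"
fun lamL :: "form \<Rightarrow> complex list" where
  "lamL zeta1 = [-5/3, -2/3, 1/3, 0, 0]"
| "lamL zeta11 = [-1/3, -4/3, -1/3, 0, 0]"
| "lamL zeta2 = [3/4, 0, -3/4, 12, -6]"
| "lamL zeta22 = [7/8, 0, -7/8, 6, -4]"
| "lamL zeta12 = [-3/4, 0, 3/4, 0, 0]"
| "lamL _ = [0,0,0,0,0]"
definition lam :: "form \<Rightarrow> nat \<Rightarrow> complex" where "lam e i = lamL e ! i"

lemma pp_dom2: "pp i \<in> dom2"
  by (auto simp: pp_def dom2_def)

lemma sum5: "(\<Sum>i<(5::nat). f i) = f 0 + f 1 + f 2 + f 3 + (f 4 :: complex)"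
  by (simp add: numeral_eq_Suc)

lemma dual: "e \<in> alphA \<Longrightarrow> a \<in> alphA \<Longrightarrow>
   (\<Sum>i<5. lam e i * coef a (kk i) (pp i)) = (if a = e then 1 else 0)"
  unfolding sum5 by (auto simp: alphA_def lam_def kk_def pp_def)


lemma nth_mid2: "j \<noteq> length p \<Longrightarrow> j \<noteq> Suc (length p) \<Longrightarrow> (p @ a # b # q) ! j = (p @ x # y # q) ! j"
proof (cases "j < length p")
  case False
  assume "j \<noteq> length p" "j \<noteq> Suc (length p)"
  with False obtain k where "j = length p + Suc (Suc k)"
    by (metis add_Suc_right less_Suc_eq less_imp_Suc_add not_less_eq)
  thus ?thesis by (simp add: nth_append)
qed (simp add: nth_append)

lemma chen_pairs:
  assumes B: "\<phi> \<in> barB" and sp: "set p \<subseteq> alphA" and sq: "set q \<subseteq> alphA" and pt: "pt \<in> dom2"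
  shows "(\<Sum>a\<in>alphA. \<Sum>b\<in>alphA. \<phi> (p @ a # b # q) * wedge_coef a b pt) = 0"
proof -
  define s where "s = length p + 2 + length q"
  define m where "m = length p"
  define c where "c = (\<lambda>w. if length w = s then \<phi> w else 0)"
  have ch: "chen_hom s c" using B by (simp add: barB_def c_def)
  have finS: "finite (supp \<phi>)" and alS: "\<And>w. w \<in> supp \<phi> \<Longrightarrow> set w \<subseteq> alphA"
    using B by (auto simp: barB_def)
  define W where "W = {w. c w \<noteq> 0 \<and> length w = s}"
  define J where "J = {0..<s} - {m, Suc m}"
  define t where "t = p @ zeta1 # zeta1 # q"
  define \<Psi> where "\<Psi> w x = wedge_coef (w ! m) (w ! Suc m) x" for w x
  have Wsupp: "W \<subseteq> supp \<phi>" by (auto simp: W_def c_def supp_def split: if_splits)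
  have H: "(\<Sum>w\<in>W. c w * \<Psi> w (ps m) * (\<Prod>j\<in>J. coef (w ! j) (ks j) (ps j))) = 0"
    if "\<forall>j. ps j \<in> dom2" for ks ps
  proof -
    have "Suc m < s" by (simp add: s_def m_def)
    thus ?thesis using ch that unfolding chen_hom_def W_def J_def \<Psi>_def by blast
  qed
  have finW: "finite W" using Wsupp finS by (rule finite_subset)
  have alph: "w ! j \<in> alphA" if "w \<in> W" "j \<in> J" for w j
  proof -
    have "set w \<subseteq> alphA" using that Wsupp alS by blast
    moreover have "j < length w" using that by (auto simp: W_def J_def)
    ultimately show ?thesis by (meson nth_mem subsetD)
  qed
  have talph: "t ! j \<in> alphA" if "j \<in> J" for j
  proof -
    have "set t \<subseteq> alphA" using sp sq by (auto simp: t_def)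
    moreover have "j < length t" using that by (auto simp: t_def J_def s_def)
    ultimately show ?thesis by (meson nth_mem subsetD)
  qed
  have iso: "(\<Sum>w\<in>{w\<in>W. \<forall>j\<in>J. w ! j = t ! j}. c w * \<Psi> w ((\<lambda>_. pt) m) * (\<Prod>j\<in>J - J. coef (w ! j) (ks j) ((\<lambda>_. pt) j))) = 0" for ks
    by (rule isolate[OF finW _ _ alph talph dual pp_dom2 H]) (auto simp: J_def pt)
  define S where "S = {w\<in>W. \<forall>j\<in>J. w ! j = t ! j}"
  define f where "f = (\<lambda>(a, b). p @ a # b # q)"
  have zeroS: "(\<Sum>w\<in>S. c w * \<Psi> w pt) = 0" using iso[of undefined] by (simp add: S_def)
  have SsubT: "S \<subseteq> f ` (alphA \<times> alphA)"
  proof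
    fix w assume "w \<in> S"
    hence wW: "w \<in> W" and agree: "\<And>j. j \<in> J \<Longrightarrow> w ! j = t ! j" by (auto simp: S_def)
    have lw: "length w = s" using wW by (simp add: W_def)
    have sw: "set w \<subseteq> alphA" using wW Wsupp alS by blast
    have weq: "w = p @ (w ! m) # (w ! Suc m) # q"
    proof (rule nth_equalityI)
      show "length w = length (p @ (w ! m) # (w ! Suc m) # q)" by (simp add: lw s_def)
      fix j assume "j < length w"
      show "w ! j = (p @ (w ! m) # (w ! Suc m) # q) ! j"
      proof (cases "j = m \<or> j = Suc m")
        case True thus ?thesis by (auto simp: m_def nth_append)
      next
        case False
        hence "j \<in> J" using \<open>j < length w\<close> lw by (auto simp: J_def)
        hence "w ! j = t ! j" by (rule agree)
        also have "\<dots> = (p @ (w ! m) # (w ! Suc m) # q) ! j"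
          unfolding t_def by (rule nth_mid2) (use False m_def in auto)
        finally show ?thesis .
      qed
    qed
    have "w ! m \<in> alphA" "w ! Suc m \<in> alphA"
      using sw lw by (auto simp: s_def m_def intro: nth_mem[THEN subsetD[OF sw]])
    thus "w \<in> f ` (alphA \<times> alphA)" using weq by (auto simp: f_def image_def)
  qed
  have "(\<Sum>w\<in>S. c w * \<Psi> w pt) = (\<Sum>w\<in>f ` (alphA \<times> alphA). c w * \<Psi> w pt)"
  proof (rule sum.mono_neutral_left)
    show "finite (f ` (alphA \<times> alphA))" by simp
    show "S \<subseteq> f ` (alphA \<times> alphA)" by (rule SsubT)
    show "\<forall>w\<in>f ` (alphA \<times> alphA) - S. c w * \<Psi> w pt = 0"
    proof
      fix w assume w: "w \<in> f ` (alphA \<times> alphA) - S"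
      then obtain a b where wab: "w = p @ a # b # q" by (auto simp: f_def)
      have "c w = 0"
      proof (rule ccontr)
        assume "c w \<noteq> 0"
        hence "w \<in> W" using wab by (simp add: W_def c_def s_def split: if_splits)
        moreover have "\<forall>j\<in>J. w ! j = t ! j"
          unfolding wab t_def by (auto simp: J_def m_def intro: nth_mid2)
        ultimately have "w \<in> S" by (simp add: S_def)
        thus False using w by simp
      qed
      thus "c w * \<Psi> w pt = 0" by simp
    qed
  qed
  also have "\<dots> = (\<Sum>x\<in>alphA \<times> alphA. c (f x) * \<Psi> (f x) pt)"
    by (rule sum.reindex_cong[where l=f]) (auto simp: inj_on_def f_def)
  also have "\<dots> = (\<Sum>(a, b)\<in>alphA \<times> alphA. \<phi> (p @ a # b # q) * wedge_coef a b pt)"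
    by (rule sum.cong) (auto simp: f_def c_def s_def \<Psi>_def m_def nth_append)
  also have "\<dots> = (\<Sum>a\<in>alphA. \<Sum>b\<in>alphA. \<phi> (p @ a # b # q) * wedge_coef a b pt)"
    by (rule sum.cartesian_product[symmetric])
  finally show ?thesis using zeroS by simp
qed



lemma brk_from_pairs:
  assumes A: "\<And>pt. pt \<in> dom2 \<Longrightarrow> (\<Sum>a\<in>alphA. \<Sum>b\<in>alphA. c a b * wedge_coef a b pt) = 0"
  shows "c zeta1 zeta2 - c zeta2 zeta1 = 0 \<and> c zeta1 zeta22 - c zeta22 zeta1 = 0 \<and>
    c zeta11 zeta2 - c zeta2 zeta11 = 0 \<and>
    (c zeta1 zeta12 - c zeta12 zeta1) - (c zeta2 zeta12 - c zeta12 zeta2) + (c zeta11 zeta22 - c zeta22 zeta11) = 0 \<and>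
    (c zeta11 zeta12 - c zeta12 zeta11) + (c zeta11 zeta22 - c zeta22 zeta11) = 0 \<and>
    (c zeta11 zeta22 - c zeta22 zeta11) - (c zeta22 zeta12 - c zeta12 zeta22) = 0"
proof -
  have E0: "(\<Sum>a\<in>alphA. \<Sum>b\<in>alphA. c a b * wedge_coef a b ((-1), (2))) = 0" using A by (simp add: dom2_def)
  have E1: "(\<Sum>a\<in>alphA. \<Sum>b\<in>alphA. c a b * wedge_coef a b ((2), (2))) = 0" using A by (simp add: dom2_def)
  have E2: "(\<Sum>a\<in>alphA. \<Sum>b\<in>alphA. c a b * wedge_coef a b ((-1), (-2))) = 0" using A by (simp add: dom2_def)
  have E3: "(\<Sum>a\<in>alphA. \<Sum>b\<in>alphA. c a b * wedge_coef a b ((-1), (3))) = 0" using A by (simp add: dom2_def)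
  have E4: "(\<Sum>a\<in>alphA. \<Sum>b\<in>alphA. c a b * wedge_coef a b ((2), (3))) = 0" using A by (simp add: dom2_def)
  have E5: "(\<Sum>a\<in>alphA. \<Sum>b\<in>alphA. c a b * wedge_coef a b ((3), (-1))) = 0" using A by (simp add: dom2_def)
  have R0: "(c zeta1 zeta2 - c zeta2 zeta1) = (168/11) * (\<Sum>a\<in>alphA. \<Sum>b\<in>alphA. c a b * wedge_coef a b ((-1), (2))) + (-84/11) * (\<Sum>a\<in>alphA. \<Sum>b\<in>alphA. c a b * wedge_coef a b ((2), (2))) + (-144/55) * (\<Sum>a\<in>alphA. \<Sum>b\<in>alphA. c a b * wedge_coef a b ((-1), (-2))) + (-1816/55) * (\<Sum>a\<in>alphA. \<Sum>b\<in>alphA. c a b * wedge_coef a b ((-1), (3))) + (200/11) * (\<Sum>a\<in>alphA. \<Sum>b\<in>alphA. c a b * wedge_coef a b ((2), (3))) + (72/11) * (\<Sum>a\<in>alphA. \<Sum>b\<in>alphA. c a b * wedge_coef a b ((3), (-1)))"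
    by (simp add: alphA_def wedge_coef_def field_simps)
  have R1: "(c zeta1 zeta22 - c zeta22 zeta1) = (54/11) * (\<Sum>a\<in>alphA. \<Sum>b\<in>alphA. c a b * wedge_coef a b ((-1), (2))) + (72/11) * (\<Sum>a\<in>alphA. \<Sum>b\<in>alphA. c a b * wedge_coef a b ((2), (2))) + (-18/55) * (\<Sum>a\<in>alphA. \<Sum>b\<in>alphA. c a b * wedge_coef a b ((-1), (-2))) + (-392/55) * (\<Sum>a\<in>alphA. \<Sum>b\<in>alphA. c a b * wedge_coef a b ((-1), (3))) + (-140/11) * (\<Sum>a\<in>alphA. \<Sum>b\<in>alphA. c a b * wedge_coef a b ((2), (3))) + (-24/11) * (\<Sum>a\<in>alphA. \<Sum>b\<in>alphA. c a b * wedge_coef a b ((3), (-1)))"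
    by (simp add: alphA_def wedge_coef_def field_simps)
  have R2: "(c zeta11 zeta2 - c zeta2 zeta11) = (138/11) * (\<Sum>a\<in>alphA. \<Sum>b\<in>alphA. c a b * wedge_coef a b ((-1), (2))) + (-168/11) * (\<Sum>a\<in>alphA. \<Sum>b\<in>alphA. c a b * wedge_coef a b ((2), (2))) + (-18/11) * (\<Sum>a\<in>alphA. \<Sum>b\<in>alphA. c a b * wedge_coef a b ((-1), (-2))) + (-304/11) * (\<Sum>a\<in>alphA. \<Sum>b\<in>alphA. c a b * wedge_coef a b ((-1), (3))) + (400/11) * (\<Sum>a\<in>alphA. \<Sum>b\<in>alphA. c a b * wedge_coef a b ((2), (3))) + (144/11) * (\<Sum>a\<in>alphA. \<Sum>b\<in>alphA. c a b * wedge_coef a b ((3), (-1)))"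
    by (simp add: alphA_def wedge_coef_def field_simps)
  have R3: "(c zeta1 zeta12 - c zeta12 zeta1) - (c zeta2 zeta12 - c zeta12 zeta2) + (c zeta11 zeta22 - c zeta22 zeta11) = (98/11) * (\<Sum>a\<in>alphA. \<Sum>b\<in>alphA. c a b * wedge_coef a b ((-1), (2))) + (-16/11) * (\<Sum>a\<in>alphA. \<Sum>b\<in>alphA. c a b * wedge_coef a b ((2), (2))) + (-30/11) * (\<Sum>a\<in>alphA. \<Sum>b\<in>alphA. c a b * wedge_coef a b ((-1), (-2))) + (-206/11) * (\<Sum>a\<in>alphA. \<Sum>b\<in>alphA. c a b * wedge_coef a b ((-1), (3))) + (80/11) * (\<Sum>a\<in>alphA. \<Sum>b\<in>alphA. c a b * wedge_coef a b ((2), (3))) + (42/11) * (\<Sum>a\<in>alphA. \<Sum>b\<in>alphA. c a b * wedge_coef a b ((3), (-1)))"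
    by (simp add: alphA_def wedge_coef_def field_simps)
  have R4: "(c zeta11 zeta12 - c zeta12 zeta11) + (c zeta11 zeta22 - c zeta22 zeta11) = (11) * (\<Sum>a\<in>alphA. \<Sum>b\<in>alphA. c a b * wedge_coef a b ((-1), (2))) + (-16) * (\<Sum>a\<in>alphA. \<Sum>b\<in>alphA. c a b * wedge_coef a b ((2), (2))) + (-9/5) * (\<Sum>a\<in>alphA. \<Sum>b\<in>alphA. c a b * wedge_coef a b ((-1), (-2))) + (-116/5) * (\<Sum>a\<in>alphA. \<Sum>b\<in>alphA. c a b * wedge_coef a b ((-1), (3))) + (40) * (\<Sum>a\<in>alphA. \<Sum>b\<in>alphA. c a b * wedge_coef a b ((2), (3))) + (12) * (\<Sum>a\<in>alphA. \<Sum>b\<in>alphA. c a b * wedge_coef a b ((3), (-1)))"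
    by (simp add: alphA_def wedge_coef_def field_simps)
  have R5: "(c zeta11 zeta22 - c zeta22 zeta11) - (c zeta22 zeta12 - c zeta12 zeta22) = (9/11) * (\<Sum>a\<in>alphA. \<Sum>b\<in>alphA. c a b * wedge_coef a b ((-1), (2))) + (144/11) * (\<Sum>a\<in>alphA. \<Sum>b\<in>alphA. c a b * wedge_coef a b ((2), (2))) + (-3/55) * (\<Sum>a\<in>alphA. \<Sum>b\<in>alphA. c a b * wedge_coef a b ((-1), (-2))) + (8/55) * (\<Sum>a\<in>alphA. \<Sum>b\<in>alphA. c a b * wedge_coef a b ((-1), (3))) + (-280/11) * (\<Sum>a\<in>alphA. \<Sum>b\<in>alphA. c a b * wedge_coef a b ((2), (3))) + (-48/11) * (\<Sum>a\<in>alphA. \<Sum>b\<in>alphA. c a b * wedge_coef a b ((3), (-1)))"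
    by (simp add: alphA_def wedge_coef_def field_simps)
  show ?thesis using R0 R1 R2 R3 R4 R5 E0 E1 E2 E3 E4 E5 by simp
qed



lemma rad_bd:
  fixes f :: "complex fps"
  assumes "\<And>n. norm (f $ n) \<le> M"
  shows "1 \<le> fps_conv_radius f"
  unfolding fps_conv_radius_def
proof (rule conv_radius_geI_ex')
  fix r :: real assume r: "0 < r" "ereal r < 1"
  hence r1: "r < 1" by simp
  have "summable (\<lambda>n. M * r ^ n)" using r r1 by (intro summable_mult summable_geometric) auto
  thus "summable (\<lambda>n. f $ n * of_real r ^ n)"
  proof (rule summable_comparison_test'[where N=0])
    fix n :: nat
    have "norm (f $ n * of_real r ^ n) = norm (f $ n) * r ^ n"
      using r by (simp add: norm_mult norm_power)
    also have "\<dots> \<le> M * r ^ n" using assms r by (intro mult_right_mono) auto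
    finally show "norm (f $ n * of_real r ^ n) \<le> M * r ^ n" .
  qed
qed

lemma eval_bd:
  fixes f :: "complex fps"
  assumes "\<And>n. norm (f $ n) \<le> M" "norm y < 1"
  shows "norm (eval_fps f y) \<le> M / (1 - norm y)"
proof -
  have sg: "summable (\<lambda>n. M * norm y ^ n)" using assms(2) by (intro summable_mult summable_geometric) auto
  have le: "norm (f $ n * y ^ n) \<le> M * norm y ^ n" for n
    using assms(1)[of n] by (simp add: norm_mult norm_power mult_right_mono)
  have sn: "summable (\<lambda>n. norm (f $ n * y ^ n))"
    by (rule summable_comparison_test'[OF sg]) (use le in auto)
  have "norm (eval_fps f y) \<le> (\<Sum>n. norm (f $ n * y ^ n))"
    unfolding eval_fps_def by (rule summable_norm[OF sn])
  also have "\<dots> \<le> (\<Sum>n. M * norm y ^ n)" by (rule suminf_le[OF le sn sg])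
  also have "\<dots> = M / (1 - norm y)"
    using assms(2) by (simp add: suminf_mult suminf_geometric divide_simps)
  finally show ?thesis .
qed

definition Ey :: "ser \<Rightarrow> complex \<Rightarrow> complex fps" where "Ey P y = Abs_fps (\<lambda>i. eval_fps (P $ i) y)"
definition ev :: "ser \<Rightarrow> complex \<Rightarrow> complex \<Rightarrow> complex" where "ev P x y = eval_fps (Ey P y) x"
definition bd :: "real \<Rightarrow> ser \<Rightarrow> bool" where "bd M P \<longleftrightarrow> (\<forall>i j. norm (P $ i $ j) \<le> M)"
definition Nice :: "ser \<Rightarrow> bool" where
  "Nice P \<longleftrightarrow> (\<forall>i. 1 \<le> fps_conv_radius (P $ i)) \<and> (\<forall>y. norm y < 1 \<longrightarrow> 1 \<le> fps_conv_radius (Ey P y))"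

lemma Ey_nth[simp]: "Ey P y $ i = eval_fps (P $ i) y" by (simp add: Ey_def)

lemma bd_Nice: "bd M P \<Longrightarrow> Nice P"
  unfolding Nice_def
proof (intro conjI allI impI)
  assume "bd M P"
  thus "1 \<le> fps_conv_radius (P $ i)" for i by (intro rad_bd[of _ M]) (simp add: bd_def)
  fix y :: complex assume "norm y < 1"
  show "1 \<le> fps_conv_radius (Ey P y)"
    by (rule rad_bd[of _ "M / (1 - norm y)"]) (use \<open>bd M P\<close> \<open>norm y < 1\<close> in \<open>auto simp: bd_def intro!: eval_bd\<close>)
qed

lemma lt1: "norm (y::complex) < 1 \<Longrightarrow> 1 \<le> r \<Longrightarrow> ereal (norm y) < r"
  by (metis ereal_less(3) less_le_trans one_ereal_def)

lemma rad_sum: "finite S \<Longrightarrow> (\<And>x. x \<in> S \<Longrightarrow> 1 \<le> fps_conv_radius (f x :: complex fps)) \<Longrightarrow> 1 \<le> fps_conv_radius (sum f S)"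
proof (induction S rule: finite_induct)
  case (insert a S)
  have "min (fps_conv_radius (f a)) (fps_conv_radius (sum f S)) \<le> fps_conv_radius (f a + sum f S)"
    by (rule fps_conv_radius_add)
  moreover have "1 \<le> min (fps_conv_radius (f a)) (fps_conv_radius (sum f S))"
    using insert by auto
  ultimately have "1 \<le> fps_conv_radius (f a + sum f S)" by (rule order.trans[rotated])
  thus ?case using insert by simp
qed simp

lemma eval_sum: "finite S \<Longrightarrow> (\<And>x. x \<in> S \<Longrightarrow> 1 \<le> fps_conv_radius (f x :: complex fps)) \<Longrightarrow> norm y < 1 \<Longrightarrow>
   eval_fps (sum f S) y = (\<Sum>x\<in>S. eval_fps (f x) y)"
proof (induction S rule: finite_induct)
  case (insert a S)
  have "eval_fps (f a + sum f S) y = eval_fps (f a) y + eval_fps (sum f S) y"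
    by (rule eval_fps_add) (use insert rad_sum[of S f] in \<open>auto intro: lt1\<close>)
  thus ?case using insert by simp
qed simp

lemma rad_mult1: "1 \<le> fps_conv_radius f \<Longrightarrow> 1 \<le> fps_conv_radius g \<Longrightarrow> 1 \<le> fps_conv_radius (f * g :: complex fps)"
  using fps_conv_radius_mult[of f g] by (auto simp: min_def split: if_splits)

lemma rad_add1: "1 \<le> fps_conv_radius f \<Longrightarrow> 1 \<le> fps_conv_radius g \<Longrightarrow> 1 \<le> fps_conv_radius (f + g :: complex fps)"
  using fps_conv_radius_add[of f g] by (auto simp: min_def split: if_splits)

lemma Nice_inner: "Nice P \<Longrightarrow> 1 \<le> fps_conv_radius (P $ i)" by (simp add: Nice_def)
lemma Nice_outer: "Nice P \<Longrightarrow> norm y < 1 \<Longrightarrow> 1 \<le> fps_conv_radius (Ey P y)" by (simp add: Nice_def)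

lemma Ey_mult:
  assumes "Nice P" "Nice Q" "norm y < 1"
  shows "Ey (P * Q) y = Ey P y * Ey Q y"
proof (rule fps_ext)
  fix i
  have "Ey (P * Q) y $ i = eval_fps (\<Sum>k=0..i. P $ k * Q $ (i - k)) y" by (simp add: fps_mult_nth)
  also have "\<dots> = (\<Sum>k=0..i. eval_fps (P $ k * Q $ (i - k)) y)"
    by (rule eval_sum) (use assms in \<open>auto intro: rad_mult1 Nice_inner\<close>)
  also have "\<dots> = (\<Sum>k=0..i. eval_fps (P $ k) y * eval_fps (Q $ (i - k)) y)"
    by (intro sum.cong refl eval_fps_mult) (use assms in \<open>auto intro: lt1 Nice_inner\<close>)
  finally show "Ey (P * Q) y $ i = (Ey P y * Ey Q y) $ i" by (simp add: fps_mult_nth)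
qed

lemma Nice_mult: "Nice P \<Longrightarrow> Nice Q \<Longrightarrow> Nice (P * Q)"
  unfolding Nice_def
proof (intro conjI allI impI)
  assume "(\<forall>i. 1 \<le> fps_conv_radius (P $ i)) \<and> (\<forall>y. norm y < 1 \<longrightarrow> 1 \<le> fps_conv_radius (Ey P y))"
     and "(\<forall>i. 1 \<le> fps_conv_radius (Q $ i)) \<and> (\<forall>y. norm y < 1 \<longrightarrow> 1 \<le> fps_conv_radius (Ey Q y))"
  hence N: "Nice P" "Nice Q" by (auto simp: Nice_def)
  show "1 \<le> fps_conv_radius ((P * Q) $ i)" for i
    unfolding fps_mult_nth by (rule rad_sum) (use N in \<open>auto intro: rad_mult1 Nice_inner\<close>)
  fix y :: complex assume "norm y < 1"
  thus "1 \<le> fps_conv_radius (Ey (P * Q) y)"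
    using N by (simp add: Ey_mult rad_mult1 Nice_outer)
qed

lemma Ey_add:
  assumes "Nice P" "Nice Q" "norm y < 1"
  shows "Ey (P + Q) y = Ey P y + Ey Q y"
  by (rule fps_ext) (use assms in \<open>auto intro!: eval_fps_add lt1 Nice_inner\<close>)

lemma Nice_add: "Nice P \<Longrightarrow> Nice Q \<Longrightarrow> Nice (P + Q)"
  unfolding Nice_def
proof (intro conjI allI impI)
  assume "(\<forall>i. 1 \<le> fps_conv_radius (P $ i)) \<and> (\<forall>y. norm y < 1 \<longrightarrow> 1 \<le> fps_conv_radius (Ey P y))"
     and "(\<forall>i. 1 \<le> fps_conv_radius (Q $ i)) \<and> (\<forall>y. norm y < 1 \<longrightarrow> 1 \<le> fps_conv_radius (Ey Q y))"
  hence N: "Nice P" "Nice Q" by (auto simp: Nice_def)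
  show "1 \<le> fps_conv_radius ((P + Q) $ i)" for i
    using N by (simp add: rad_add1 Nice_inner)
  fix y :: complex assume "norm y < 1"
  thus "1 \<le> fps_conv_radius (Ey (P + Q) y)"
    using N by (simp add: Ey_add rad_add1 Nice_outer)
qed

lemma Ey_0[simp]: "Ey 0 y = 0" by (rule fps_ext) simp

lemma Nice_0: "Nice 0" by (simp add: Nice_def)

lemma Nice_sum: "finite S \<Longrightarrow> (\<And>x. x \<in> S \<Longrightarrow> Nice (f x)) \<Longrightarrow> Nice (sum f S)"
  by (induction S rule: finite_induct) (auto intro: Nice_add Nice_0)

lemma bd_cst: "bd (norm c) (cst c)" by (auto simp: bd_def cst_def)

lemma Nice_cst: "Nice (cst c)" by (rule bd_Nice[OF bd_cst])

lemma ev_mult: "Nice P \<Longrightarrow> Nice Q \<Longrightarrow> norm x < 1 \<Longrightarrow> norm y < 1 \<Longrightarrow> ev (P * Q) x y = ev P x y * ev Q x y"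
  unfolding ev_def by (simp add: Ey_mult eval_fps_mult lt1 Nice_outer)

lemma ev_add: "Nice P \<Longrightarrow> Nice Q \<Longrightarrow> norm x < 1 \<Longrightarrow> norm y < 1 \<Longrightarrow> ev (P + Q) x y = ev P x y + ev Q x y"
  unfolding ev_def by (simp add: Ey_add eval_fps_add lt1 Nice_outer)

lemma ev_0[simp]: "ev 0 x y = 0" by (simp add: ev_def)

lemma ev_sum: "finite S \<Longrightarrow> (\<And>z. z \<in> S \<Longrightarrow> Nice (f z)) \<Longrightarrow> norm x < 1 \<Longrightarrow> norm y < 1 \<Longrightarrow>
  ev (sum f S) x y = (\<Sum>z\<in>S. ev (f z) x y)"
  by (induction S rule: finite_induct) (auto simp: ev_add Nice_sum)

lemma Ey_cst: "Ey (cst c) y = fps_const c"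
  by (rule fps_ext) (simp add: cst_def)

lemma ev_cst[simp]: "ev (cst c) x y = c" by (simp add: ev_def Ey_cst)



lemma norm_sum_le_card:
  fixes f :: "nat \<Rightarrow> complex"
  assumes "\<And>k. k \<in> {0..i} \<Longrightarrow> norm (f k) \<le> (if k = 0 then 0 else 1)"
  shows "norm (\<Sum>k=0..i. f k) \<le> real i"
proof -
  have "norm (\<Sum>k=0..i. f k) \<le> (\<Sum>k=0..i. norm (f k))" by (rule norm_sum)
  also have "\<dots> \<le> (\<Sum>k=0..i. (if k = 0 then 0 else 1::real))" by (rule sum_mono) (rule assms)
  also have "\<dots> = (\<Sum>k\<in>{1..i}. 1::real)"
    by (rule sum.mono_neutral_cong_right) auto
  also have "\<dots> = real i" by simp
  finally show ?thesis .
qed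

lemma mult_bound:
  assumes Q0: "Q $ 0 = 0"
    and Qk: "\<And>k p j. 0 < k \<Longrightarrow> (\<forall>j. norm (p $ j) \<le> 1) \<Longrightarrow> norm ((Q $ k * p) $ j) \<le> (1::real)"
    and P: "bd 1 P"
  shows "norm ((Q * P) $ i $ j) \<le> real i"
proof -
  have "(Q * P) $ i $ j = (\<Sum>k=0..i. (Q $ k * P $ (i - k)) $ j)" by (simp add: fps_mult_nth fps_sum_nth)
  also have "norm \<dots> \<le> real i"
  proof (rule norm_sum_le_card)
    fix k assume "k \<in> {0..i}"
    show "norm ((Q $ k * P $ (i - k)) $ j) \<le> (if k = 0 then 0 else 1)"
    proof (cases "k = 0")
      case False
      thus ?thesis using Qk[of k "P $ (i - k)" j] P by (auto simp: bd_def)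
    qed (simp add: Q0)
  qed
  finally show ?thesis .
qed

lemma bd_Jx:
  assumes "\<And>i j. 0 < i \<Longrightarrow> norm (R $ i $ j) \<le> real i"
  shows "bd 1 (Jx R)"
  unfolding bd_def
proof (intro allI)
  fix i j
  show "norm (Jx R $ i $ j) \<le> 1"
  proof (cases "i = 0")
    case False
    have "norm (Jx R $ i $ j) = norm (R $ i $ j) / real i" using False by (simp add: norm_divide)
    also have "\<dots> \<le> 1" using assms[of i j] False by (simp add: divide_simps)
    finally show ?thesis .
  qed simp
qed

lemma bd_L1f: "bd 1 (L1f u)"
proof (induction u)
  case Nil thus ?case by (simp add: bd_def fps_one_nth)
next
  case (Cons a u)
  note P = Cons.IH
  have R: "norm ((Fx a * L1f u) $ i $ j) \<le> real i" if "0 < i" for i j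
  proof (cases a)
    case zeta1
    thus ?thesis using P that by (auto simp: bd_def intro: order.trans[of _ 1])
  next
    case zeta11
    have "norm ((Aser * L1f u) $ i $ j) \<le> real i"
      by (rule mult_bound[OF _ _ P]) auto
    thus ?thesis using zeta11 by simp
  next
    case zeta12
    have "norm ((Cser * L1f u) $ i $ j) \<le> real i"
      by (rule mult_bound[OF _ _ P]) (auto simp: fps_X_power_mult_nth)
    thus ?thesis using zeta12 by simp
  next
    case zeta12_1
    have "norm ((Cser * L1f u) $ i $ j) \<le> real i"
      by (rule mult_bound[OF _ _ P]) (auto simp: fps_X_power_mult_nth)
    thus ?thesis using zeta12_1 by simp
  qed simp_all
  show ?case by (simp add: bd_Jx R del: Jx_nth)
qed

lemma bd_Tr: "bd M P \<Longrightarrow> bd M (Tr P)" by (simp add: bd_def)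

lemma bd_L2f: "bd 1 (L2f u)" unfolding L2f_def by (rule bd_Tr[OF bd_L1f])

lemma Nice_L1f: "Nice (L1f u)" by (rule bd_Nice[OF bd_L1f])
lemma Nice_L2f: "Nice (L2f u)" by (rule bd_Nice[OF bd_L2f])

lemma Nice_Fx: "Nice (Fx a)"
proof -
  have "bd 1 (Fx a)" by (cases a) (auto simp: bd_def fps_one_nth fps_X_power_nth)
  thus ?thesis by (rule bd_Nice)
qed



lemma geo_eval:
  fixes z t :: complex
  assumes "norm (z * t) < 1"
  shows "eval_fps (Abs_fps (\<lambda>n. if n = 0 then 0 else z ^ n)) t = z * t / (1 - z * t)"
proof -
  have g: "(\<lambda>n. (z * t) ^ n) sums (1 / (1 - z * t))" using geometric_sums[OF assms] .
  have s: "(\<lambda>n. if n = 0 then 1 else 0) sums (1::complex)"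
    using sums_single[of 0 "\<lambda>_. 1::complex"] by simp
  have "(\<lambda>n. (z * t) ^ n - (if n = 0 then 1 else 0)) sums (1 / (1 - z * t) - 1)"
    by (rule sums_diff[OF g s])
  moreover have "(\<lambda>n. (z * t) ^ n - (if n = 0 then 1 else 0)) = (\<lambda>n. Abs_fps (\<lambda>n. if n = 0 then 0 else z ^ n) $ n * t ^ n)"
    by (auto simp: fun_eq_iff power_mult_distrib)
  ultimately have "(\<lambda>n. Abs_fps (\<lambda>n. if n = 0 then 0 else z ^ n) $ n * t ^ n) sums (1 / (1 - z * t) - 1)" by simp
  hence "eval_fps (Abs_fps (\<lambda>n. if n = 0 then 0 else z ^ n)) t = 1 / (1 - z * t) - 1"
    unfolding eval_fps_def by (rule sums_unique[symmetric])
  also have "\<dots> = z * t / (1 - z * t)"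
  proof -
    have "1 - z * t \<noteq> 0" using assms by (metis norm_one order_less_irrefl right_minus_eq)
    thus ?thesis by (simp add: field_simps)
  qed
  finally show ?thesis .
qed

lemma one_plus_of_nat_ne0[simp]: "(1 + of_nat n :: complex) \<noteq> 0"
  by (metis of_nat_Suc of_nat_eq_0_iff nat.distinct(1))

lemma Ey_one: "Ey 1 y = 1"
  by (rule fps_ext) (simp add: fps_one_nth)

lemma Ey_Aser: "Ey Aser y = Abs_fps (\<lambda>n. if n = 0 then 0 else 1 ^ n)"
  by (rule fps_ext) simp

lemma Ey_Cser: "Ey Cser y = Abs_fps (\<lambda>n. if n = 0 then 0 else y ^ n)"
  by (rule fps_ext) simp

lemma evFx:
  assumes "a \<in> {zeta1, zeta11, zeta12_1}" "t \<noteq> 0" "norm t < 1" "norm y < 1"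
  shows "eval_fps (Ey (Fx a) y) t = t * coef a False (t, y)"
proof -
  have "norm y * norm t \<le> 1 * norm t" by (rule mult_right_mono) (use assms in auto)
  hence "norm y * norm t < 1" using assms(3) by linarith
  hence yt: "norm (y * t) < 1" by (simp add: norm_mult)
  have 1: "norm (1 * t) < 1" using assms by simp
  have d: "1 - t * y \<noteq> 0" using yt by (metis mult.commute norm_one order_less_irrefl right_minus_eq)
  have "a = zeta1 \<or> a = zeta11 \<or> a = zeta12_1" using assms(1) by auto
  moreover have ?thesis if "a = zeta1" using that assms by (simp add: Ey_one)
  moreover have ?thesis if "a = zeta11" using that geo_eval[OF 1] assms by (simp add: Ey_Aser field_simps)
  moreover have ?thesis if "a = zeta12_1" using that geo_eval[OF yt] d by (simp add: Ey_Cser field_simps)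
  ultimately show ?thesis by blast
qed

lemma Ey_Jx:
  assumes "Nice P" "norm y < 1"
  shows "Ey (Jx P) y = J1 (Ey P y)"
proof (rule fps_ext)
  fix i
  show "Ey (Jx P) y $ i = J1 (Ey P y) $ i"
  proof (cases "i = 0")
    case False
    have "eval_fps (fps_const (1 / of_nat i) * P $ i) y = (1 / of_nat i) * eval_fps (P $ i) y"
      by (subst eval_fps_mult) (use assms in \<open>auto intro: lt1 Nice_inner\<close>)
    thus ?thesis using False by (simp add: J1_def)
  qed (simp add: J1_def)
qed

lemma contour_spike0:
  assumes "(f has_contour_integral i) (linepath 0 x)"
    and "\<And>t. t \<in> closed_segment 0 x \<Longrightarrow> t \<noteq> 0 \<Longrightarrow> g t = f t"
  shows "(g has_contour_integral i) (linepath 0 x)"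
  using assms(1) unfolding has_contour_integral_def
proof (rule has_integral_spike_finite[rotated 2])
  show "finite {0::real}" by simp
  fix s assume s: "s \<in> {0..1} - {0::real}"
  show "g (linepath 0 x s) * vector_derivative (linepath 0 x) (at s within {0..1}) =
        f (linepath 0 x s) * vector_derivative (linepath 0 x) (at s within {0..1})"
  proof (cases "x = 0")
    case True thus ?thesis using s by (simp add: vector_derivative_linepath_within)
  next
    case False
    have "linepath 0 x s \<in> closed_segment 0 x" using s linepath_in_path[of s 0 x] by auto
    moreover have "linepath 0 x s \<noteq> 0" using s False by (auto simp: scaleR_conv_of_real)
    ultimately show ?thesis using assms(2) by simp
  qed
qed

lemma T1:
  assumes "set u \<subseteq> {zeta1, zeta11, zeta12_1}" "u = [] \<or> last u \<noteq> zeta1" "norm y < 1" "norm x < 1"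
  shows "L1 u x y = ev (L1f u) x y"
  using assms
proof (induction u arbitrary: x)
  case Nil thus ?case by (simp add: ev_def Ey_one)
next
  case (Cons a u x)
  have aA: "a \<in> {zeta1, zeta11, zeta12_1}" and uA: "set u \<subseteq> {zeta1, zeta11, zeta12_1}" using Cons.prems by auto
  have ul: "u = [] \<or> last u \<noteq> zeta1" using Cons.prems(2) by (cases u) auto
  have una: "a = zeta1 \<Longrightarrow> u \<noteq> []" using Cons.prems(2) by auto
  have y1: "norm y < 1" and x1: "norm x < 1" using Cons.prems by auto
  have IH: "L1 u t y = ev (L1f u) t y" if "norm t < 1" for t using Cons.IH[OF uA ul y1 that] .
  define Q where "Q = Ey (Fx a) y * Ey (L1f u) y"
  have QE: "Ey (Fx a * L1f u) y = Q" unfolding Q_def by (rule Ey_mult[OF Nice_Fx Nice_L1f y1])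
  define R where "R = Ey (L1f (a # u)) y"
  have RJ: "R = J1 Q" unfolding R_def
    by (simp add: Ey_Jx[OF Nice_mult[OF Nice_Fx Nice_L1f] y1] QE del: Jx_nth)
  have Q0: "Q $ 0 = 0"
  proof -
    have "Fx a $ 0 * L1f u $ 0 = 0" using una by (auto simp: Fx_nth0 L1f_nth0)
    hence z: "(Fx a * L1f u) $ 0 = 0" by (simp add: mult_nth0)
    have "Q $ 0 = eval_fps ((Fx a * L1f u) $ 0) y" by (simp flip: QE)
    thus ?thesis by (simp only: z eval_fps_0)
  qed
  have radR: "1 \<le> fps_conv_radius R" unfolding R_def by (rule Nice_outer[OF Nice_L1f y1])
  define dR where "dR = fps_deriv R"
  have raddR: "1 \<le> fps_conv_radius dR" unfolding dR_def using radR fps_conv_radius_deriv[of R] by (simp add: order.trans)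
  have radQ: "1 \<le> fps_conv_radius Q" unfolding Q_def
    by (rule rad_mult1[OF Nice_outer[OF Nice_Fx y1] Nice_outer[OF Nice_L1f y1]])
  have dRX: "fps_X * dR = Q"
  proof (rule fps_ext)
    fix n show "(fps_X * dR) $ n = Q $ n"
      by (cases n) (auto simp: fps_X_mult_nth dR_def RJ J1_def Q0)
  qed
  have deriv: "(eval_fps R has_field_derivative eval_fps dR t) (at t within ball 0 1)" if "t \<in> ball 0 1" for t
    unfolding dR_def by (rule has_field_derivative_eval_fps) (use that radR in \<open>auto intro: lt1\<close>)
  have seg: "closed_segment 0 x \<subseteq> ball 0 1"
    by (rule closed_segment_subset) (use x1 in auto)
  have prim: "(eval_fps dR has_contour_integral (eval_fps R x - eval_fps R 0)) (linepath 0 x)"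
    using contour_integral_primitive[OF deriv, of "linepath 0 x"] seg by auto
  have R0: "eval_fps R 0 = 0" by (simp add: eval_fps_at_0 RJ J1_def)
  have eqh: "coef a False (t, y) * L1 u t y = eval_fps dR t" if "t \<in> closed_segment 0 x" "t \<noteq> 0" for t
  proof -
    have t1: "norm t < 1" using that seg by auto
    have "t * eval_fps dR t = eval_fps (fps_X * dR) t"
      by (subst eval_fps_mult) (use t1 raddR in \<open>auto intro: lt1\<close>)
    also have "\<dots> = eval_fps Q t" by (simp add: dRX)
    also have "\<dots> = eval_fps (Ey (Fx a) y) t * eval_fps (Ey (L1f u) y) t"
      unfolding Q_def by (rule eval_fps_mult) (use t1 y1 in \<open>auto intro: lt1 Nice_outer[OF Nice_Fx] Nice_outer[OF Nice_L1f]\<close>)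
    also have "\<dots> = t * coef a False (t, y) * L1 u t y"
      using evFx[OF aA that(2) t1 y1] IH[OF t1] by (simp add: ev_def)
    finally show ?thesis using that(2) by simp
  qed
  have "((\<lambda>t. coef a False (t, y) * L1 u t y) has_contour_integral eval_fps R x) (linepath 0 x)"
    by (rule contour_spike0[OF prim[unfolded R0, simplified]]) (rule eqh)
  hence "L1 (a # u) x y = eval_fps R x" by (simp add: contour_integral_unique)
  thus ?case by (simp add: R_def ev_def)
qed



lemma suminf_infsum: "summable (\<lambda>n. norm (f n :: complex)) \<Longrightarrow> infsum f UNIV = suminf f"
  by (rule infsumI) (rule norm_summable_imp_has_sum[OF _ summable_sums[OF summable_norm_cancel]])

lemma dbl:
  fixes a :: "nat \<Rightarrow> nat \<Rightarrow> complex"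
  assumes bnd: "\<And>i j. norm (a i j) \<le> M * r ^ i * s ^ j" and r: "0 \<le> r" "r < 1" and s: "0 \<le> s" "s < 1"
  shows "(\<Sum>i. \<Sum>j. a i j) = infsum (\<lambda>i. infsum (\<lambda>j. a i j) UNIV) UNIV"
proof -
  have sgj: "summable (\<lambda>j. M * r ^ i * s ^ j)" for i using s by (intro summable_mult summable_geometric) auto
  have sj: "summable (\<lambda>j. norm (a i j))" for i
    by (rule summable_comparison_test'[OF sgj]) (use bnd in auto)
  have inner: "infsum (\<lambda>j. a i j) UNIV = (\<Sum>j. a i j)" for i by (rule suminf_infsum[OF sj])
  have ib: "norm (\<Sum>j. a i j) \<le> M * r ^ i * (1 / (1 - s))" for i
  proof -
    have "norm (\<Sum>j. a i j) \<le> (\<Sum>j. norm (a i j))" by (rule summable_norm[OF sj])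
    also have "\<dots> \<le> (\<Sum>j. M * r ^ i * s ^ j)" by (rule suminf_le[OF _ sj sgj]) (use bnd in auto)
    also have "\<dots> = M * r ^ i * (1 / (1 - s))" using s by (simp add: suminf_mult suminf_geometric)
    finally show ?thesis .
  qed
  have sgi: "summable (\<lambda>i. M * r ^ i * (1 / (1 - s)))" using r by (intro summable_mult2 summable_mult summable_geometric) auto
  have si: "summable (\<lambda>i. norm (\<Sum>j. a i j))"
    by (rule summable_comparison_test'[OF sgi]) (use ib in auto)
  show ?thesis by (simp add: inner suminf_infsum[OF si])
qed

lemma swap_suminf:
  fixes a :: "nat \<Rightarrow> nat \<Rightarrow> complex"
  assumes bnd: "\<And>i j. norm (a i j) \<le> M * r ^ i * s ^ j" and r: "0 \<le> r" "r < 1" and s: "0 \<le> s" "s < 1"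
  shows "(\<Sum>i. \<Sum>j. a i j) = (\<Sum>j. \<Sum>i. a i j)"
proof -
  have M: "0 \<le> M" using bnd[of 0 0] by (metis norm_ge_zero order.trans mult.right_neutral power_0)
  define g where "g = (\<lambda>(i::nat, j::nat). M * r ^ i * s ^ j)"
  have gj: "(\<lambda>j. norm (g (i, j))) summable_on UNIV" for i
    unfolding g_def using s M r
    by (intro norm_summable_imp_summable_on) (auto intro!: summable_mult summable_geometric simp: abs_mult)
  have gi_eq: "infsum (\<lambda>j. norm (g (i, j))) UNIV = M * r ^ i * (1 / (1 - s))" for i
  proof -
    have "infsum (\<lambda>j. norm (g (i, j))) UNIV = (\<Sum>j. norm (g (i, j)))"
    proof (rule infsumI, rule norm_summable_imp_has_sum)
      show "summable (\<lambda>n. norm (norm (g (i, n))))"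
        unfolding g_def using s M r by (auto intro!: summable_mult summable_geometric simp: abs_mult)
      thus "(\<lambda>n. norm (g (i, n))) sums (\<Sum>j. norm (g (i, j)))" by (intro summable_sums) simp
    qed
    also have "\<dots> = (\<Sum>j. M * r ^ i * s ^ j)" using M r s by (simp add: g_def abs_mult)
    also have "\<dots> = M * r ^ i * (1 / (1 - s))" using s by (simp add: suminf_mult suminf_geometric)
    finally show ?thesis .
  qed
  have gi: "(\<lambda>i. norm (infsum (\<lambda>j. norm (g (i, j))) UNIV)) summable_on UNIV"
    unfolding gi_eq using s M r
    by (intro norm_summable_imp_summable_on) (auto intro!: summable_mult summable_mult2 summable_geometric simp: abs_mult)
  have gS: "(\<lambda>x. norm (g x)) summable_on UNIV \<times> UNIV"
    using Infinite_Sum.abs_summable_on_Sigma_iff[where f=g and A=UNIV and B="\<lambda>_. UNIV"] gj gi by auto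
  have aS: "(\<lambda>x. norm ((\<lambda>(i, j). a i j) x)) summable_on UNIV \<times> UNIV"
    by (rule Infinite_Sum.abs_summable_on_comparison_test[OF gS]) (use bnd M r s in \<open>auto simp: g_def abs_mult\<close>)
  hence aS': "(\<lambda>(i, j). a i j) summable_on UNIV \<times> UNIV" by (rule abs_summable_summable)
  have "(\<Sum>i. \<Sum>j. a i j) = infsum (\<lambda>i. infsum (\<lambda>j. a i j) UNIV) UNIV"
    by (rule dbl[OF bnd r s])
  also have "\<dots> = infsum (\<lambda>j. infsum (\<lambda>i. a i j) UNIV) UNIV"
    by (rule infsum_swap_banach[OF aS'])
  also have "\<dots> = (\<Sum>j. \<Sum>i. a i j)"
    by (rule dbl[symmetric, of "\<lambda>j i. a i j" M s r]) (use bnd s r in \<open>auto simp: mult_ac\<close>)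
  finally show ?thesis .
qed

lemma ev_expand: "ev P x y = (\<Sum>i. (\<Sum>j. P $ i $ j * y ^ j) * x ^ i)"
  by (simp add: ev_def eval_fps_def)

lemma ev_Tr:
  assumes "bd M P" "norm x < 1" "norm y < 1"
  shows "ev (Tr P) x y = ev P y x"
proof -
  define a where "a i j = P $ j $ i * y ^ j * x ^ i" for i j
  have bnd: "norm (a i j) \<le> M * norm x ^ i * norm y ^ j" for i j
  proof -
    have "norm (P $ j $ i) * (norm x ^ i * norm y ^ j) \<le> M * (norm x ^ i * norm y ^ j)"
      by (rule mult_right_mono) (use assms(1) in \<open>auto simp: bd_def\<close>)
    thus ?thesis by (simp add: a_def norm_mult norm_power mult_ac)
  qed
  have sjg: "summable (\<lambda>j. f j * z ^ j)" if "norm z < 1" "\<And>j. norm (f j) \<le> M" for f and z :: complex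
  proof (rule summable_comparison_test'[where N=0])
    show "summable (\<lambda>j. M * norm z ^ j)" using that by (intro summable_mult summable_geometric) auto
    show "norm (f j * z ^ j) \<le> M * norm z ^ j" for j
      using that(2)[of j] by (simp add: norm_mult norm_power mult_right_mono)
  qed
  have sj: "summable (\<lambda>j. P $ i $ j * z ^ j)" "summable (\<lambda>j. P $ j $ i * z ^ j)" if "norm z < 1" for i and z :: complex
    using assms(1) that by (auto simp: bd_def intro!: sjg)
  have "ev (Tr P) x y = (\<Sum>i. \<Sum>j. a i j)"
    unfolding ev_expand a_def by (simp add: suminf_mult2[OF sj(2)[OF assms(3)]])
  also have "\<dots> = (\<Sum>j. \<Sum>i. a i j)"
    by (rule swap_suminf[OF bnd]) (use assms in auto)
  also have "\<dots> = (\<Sum>i. \<Sum>j. P $ i $ j * x ^ j * y ^ i)"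
    by (simp add: a_def mult_ac)
  also have "\<dots> = ev P y x"
    unfolding ev_expand by (simp add: suminf_mult2[OF sj(1)[OF assms(2)]])
  finally show ?thesis .
qed

lemma coef_swap: "coef w True (x, t) = coef (swapL w) False (t, x)"
  by (cases w) (auto simp: mult.commute)

lemma L2_swap: "L2 u x y = L1 (map swapL u) y x"
  by (induction u arbitrary: y) (simp_all add: coef_swap)

lemma T2:
  assumes "set u \<subseteq> {zeta2, zeta22, zeta12_2}" "u = [] \<or> last u \<noteq> zeta2" "norm x < 1" "norm y < 1"
  shows "L2 u x y = ev (L2f u) x y"
proof -
  have s: "set (map swapL u) \<subseteq> {zeta1, zeta11, zeta12_1}" using assms(1) by auto
  have l: "map swapL u = [] \<or> last (map swapL u) \<noteq> zeta1"
    using assms(2) by (auto simp: last_map swapL_eq_iff)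
  have "L2 u x y = L1 (map swapL u) y x" by (rule L2_swap)
  also have "\<dots> = ev (L1f (map swapL u)) y x" by (rule T1[OF s l assms(3) assms(4)])
  also have "\<dots> = ev (L2f u) x y"
    unfolding L2f_def by (rule ev_Tr[OF bd_L1f assms(3,4), symmetric])
  finally show ?thesis .
qed



lemma barB0_Good:
  assumes B: "\<phi> \<in> barB0"
  shows "Good \<phi>"
  unfolding Good_def
proof (intro conjI allI)
  have BB: "\<phi> \<in> barB" and E: "\<forall>w\<in>supp \<phi>. w = [] \<or> last w \<notin> {zeta1, zeta2}"
    using B by (auto simp: barB0_def)
  have alS: "\<And>w. \<phi> w \<noteq> 0 \<Longrightarrow> set w \<subseteq> alphA" using BB by (auto simp: barB_def supp_def)
  fix p
  show "\<phi> (p @ [zeta1]) = 0" using E by (auto simp: supp_def)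
  show "\<phi> (p @ [zeta2]) = 0" using E by (auto simp: supp_def)
  fix q
  show "brk \<phi> p q"
  proof (cases "set p \<subseteq> alphA \<and> set q \<subseteq> alphA")
    case True
    define c where "c a b = \<phi> (p @ a # b # q)" for a b
    have "\<And>pt. pt \<in> dom2 \<Longrightarrow> (\<Sum>a\<in>alphA. \<Sum>b\<in>alphA. c a b * wedge_coef a b pt) = 0"
      unfolding c_def using chen_pairs[OF BB] True by blast
    from brk_from_pairs[OF this] have H: "c zeta1 zeta2 - c zeta2 zeta1 = 0 \<and> c zeta1 zeta22 - c zeta22 zeta1 = 0 \<and>
    c zeta11 zeta2 - c zeta2 zeta11 = 0 \<and>
    (c zeta1 zeta12 - c zeta12 zeta1) - (c zeta2 zeta12 - c zeta12 zeta2) + (c zeta11 zeta22 - c zeta22 zeta11) = 0 \<and>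
    (c zeta11 zeta12 - c zeta12 zeta11) + (c zeta11 zeta22 - c zeta22 zeta11) = 0 \<and>
    (c zeta11 zeta22 - c zeta22 zeta11) - (c zeta22 zeta12 - c zeta12 zeta22) = 0" .
    show ?thesis unfolding brk_def Let_def using H[unfolded c_def] by blast
  next
    case False
    have "\<phi> (p @ a # b # q) = 0" for a b using alS False by fastforce
    thus ?thesis by (simp add: brk_def Let_def)
  qed
qed

lemma barB0_bnd:
  assumes B: "\<phi> \<in> barB0"
  shows "\<exists>n. bnd \<phi> n"
proof -
  have fin: "finite (supp \<phi>)" and alS: "\<And>w. \<phi> w \<noteq> 0 \<Longrightarrow> set w \<subseteq> alphA"
    using B by (auto simp: barB0_def barB_def supp_def)
  define n where "n = Max (insert 0 (length ` supp \<phi>))"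
  have "length w \<le> n" if "\<phi> w \<noteq> 0" for w
    unfolding n_def using fin that by (intro Max_ge) (auto simp: supp_def)
  thus ?thesis using alS by (auto simp: bnd_def)
qed

lemma h_sum:
  fixes h :: "complex \<Rightarrow> 'r::comm_ring_1"
  assumes "\<And>a b. h (a + b) = h a + h b" "h 0 = 0"
  shows "h (sum f S) = (\<Sum>x\<in>S. h (f x))"
  by (induction S rule: infinite_finite_induct) (auto simp: assms)

lemma iota_sum:
  fixes c :: "form list \<Rightarrow> complex" and h :: "complex \<Rightarrow> 'r::comm_ring_1"
    and X :: "form list \<Rightarrow> form list \<Rightarrow> 'r"
  assumes fin: "finite (supp c)"
    and h_add: "\<And>a b. h (a + b) = h a + h b" and h_mult: "\<And>a b. h (a * b) = h a * h b"
    and h_nat: "\<And>n. h (of_nat n) = of_nat n"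
  shows "(\<Sum>p\<in>supp (iota_gen f g c). h (iota_gen f g c p) * X (fst p) (snd p)) =
         (\<Sum>w\<in>supp c. h (c w) * Kg f g X w)"
proof -
  have h0: "h 0 = 0" using h_nat[of 0] by simp
  define C where "C w p = {l. l \<le> length w \<and> word_map f (take l w) = Some (fst p) \<and> word_map g (drop l w) = Some (snd p)}" for w p
  have iota_eq: "iota_gen f g c p = (\<Sum>w\<in>supp c. c w * of_nat (card (C w p)))" for p
    by (cases p) (simp add: iota_gen_def C_def)
  define RP where "RP = (\<lambda>(w, l). (the (word_map f (take l w)), the (word_map g (drop l w)))) ` (SIGMA w:supp c. {0..length w})"
  have finRP: "finite RP" unfolding RP_def using fin by auto
  have inRP: "(u, v) \<in> RP" if "w \<in> supp c" "l \<le> length w" "word_map f (take l w) = Some u" "word_map g (drop l w) = Some v" for w l u v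
    unfolding RP_def image_def
    by (rule CollectI, rule bexI[where x="(w, l)"]) (use that in auto)
  have suppRP: "supp (iota_gen f g c) \<subseteq> RP"
  proof
    fix p assume "p \<in> supp (iota_gen f g c)"
    hence "(\<Sum>w\<in>supp c. c w * of_nat (card (C w p))) \<noteq> 0" by (simp add: supp_def iota_eq)
    then obtain w where w: "w \<in> supp c" "card (C w p) \<noteq> 0" by (metis (no_types, lifting) mult_zero_right of_nat_0 sum.neutral)
    then obtain l where "l \<in> C w p" by fastforce
    thus "p \<in> RP" using inRP[OF w(1)] by (cases p) (auto simp: C_def)
  qed
  have step1: "(\<Sum>p\<in>supp (iota_gen f g c). h (iota_gen f g c p) * X (fst p) (snd p)) =
      (\<Sum>p\<in>RP. h (iota_gen f g c p) * X (fst p) (snd p))"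
    by (rule sum.mono_neutral_left[OF finRP suppRP]) (auto simp: supp_def h0)
  have cardsum: "of_nat (card (C w p)) = (\<Sum>l=0..length w. if word_map f (take l w) = Some (fst p) \<and> word_map g (drop l w) = Some (snd p) then 1 else (0::'r))" for w p
  proof -
    have "C w p = {0..length w} \<inter> {l. word_map f (take l w) = Some (fst p) \<and> word_map g (drop l w) = Some (snd p)}"
      by (auto simp: C_def)
    hence "card (C w p) = (\<Sum>l\<in>{0..length w}. if word_map f (take l w) = Some (fst p) \<and> word_map g (drop l w) = Some (snd p) then 1 else (0::nat))"
      by (simp add: sum.If_cases)
    thus ?thesis by (simp add: of_nat_sum if_distrib cong: if_cong)
  qed
  have inner: "(\<Sum>p\<in>RP. of_nat (card (C w p)) * X (fst p) (snd p)) = Kg f g X w" if w: "w \<in> supp c" for w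
  proof -
    have "(\<Sum>p\<in>RP. of_nat (card (C w p)) * X (fst p) (snd p)) =
        (\<Sum>l=0..length w. \<Sum>p\<in>RP. if word_map f (take l w) = Some (fst p) \<and> word_map g (drop l w) = Some (snd p) then X (fst p) (snd p) else 0)"
      unfolding cardsum sum_distrib_right by (subst sum.swap) (intro sum.cong refl, simp)
    also have "\<dots> = (\<Sum>l=0..length w. kt f g X w l)"
    proof (rule sum.cong[OF refl])
      fix l assume l: "l \<in> {0..length w}"
      show "(\<Sum>p\<in>RP. if word_map f (take l w) = Some (fst p) \<and> word_map g (drop l w) = Some (snd p) then X (fst p) (snd p) else 0) = kt f g X w l"
      proof (cases "\<exists>u v. word_map f (take l w) = Some u \<and> word_map g (drop l w) = Some v")
        case True
        then obtain u v where uv: "word_map f (take l w) = Some u" "word_map g (drop l w) = Some v" by blast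
        have "(\<Sum>p\<in>RP. if word_map f (take l w) = Some (fst p) \<and> word_map g (drop l w) = Some (snd p) then X (fst p) (snd p) else 0)
            = (\<Sum>p\<in>RP. if p = (u, v) then X u v else 0)"
          by (intro sum.cong refl) (auto simp: uv)
        also have "\<dots> = X u v" using inRP[OF w _ uv] l finRP by simp
        finally show ?thesis by (simp add: kt_def uv)
      next
        case False
        hence "kt f g X w l = 0" by (auto simp: kt_def split: option.splits)
        moreover have "(\<Sum>p\<in>RP. if word_map f (take l w) = Some (fst p) \<and> word_map g (drop l w) = Some (snd p) then X (fst p) (snd p) else 0) = 0"
          using False by (intro sum.neutral) auto
        ultimately show ?thesis by simp
      qed
    qed
    finally show ?thesis by (simp add: Kg_def)
  qed
  have "(\<Sum>p\<in>RP. h (iota_gen f g c p) * X (fst p) (snd p)) =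
      (\<Sum>p\<in>RP. \<Sum>w\<in>supp c. h (c w) * (of_nat (card (C w p)) * X (fst p) (snd p)))"
    by (simp add: iota_eq h_sum[OF h_add h0] h_mult h_nat sum_distrib_right sum_distrib_left mult_ac)
  also have "\<dots> = (\<Sum>w\<in>supp c. h (c w) * (\<Sum>p\<in>RP. of_nat (card (C w p)) * X (fst p) (snd p)))"
    by (simp add: sum.swap[of _ RP] sum_distrib_left)
  also have "\<dots> = (\<Sum>w\<in>supp c. h (c w) * Kg f g X w)"
    by (intro sum.cong refl) (simp add: inner)
  finally show ?thesis using step1 by simp
qed



lemma GK_supp:
  assumes "bnd \<phi> n" "finite (supp \<phi>)"
  shows "GK K n \<phi> = (\<Sum>w\<in>supp \<phi>. cst (\<phi> w) * K w)"
  unfolding GK_def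
proof (rule sum.mono_neutral_right)
  show "supp \<phi> \<subseteq> Wds n" using assms(1) by (auto simp: bnd_def supp_def Wds_def)
  show "\<forall>w\<in>Wds n - supp \<phi>. cst (\<phi> w) * K w = 0" by (auto simp: supp_def)
qed simp

lemma Nice_kt: "(\<And>u v. Nice (X u v)) \<Longrightarrow> Nice (kt f g X w l)"
  by (auto simp: kt_def Nice_0 split: option.splits)

lemma Nice_K21: "Nice (K21 w)"
  unfolding K21_def Kg_def by (rule Nice_sum) (auto intro!: Nice_kt Nice_mult Nice_L1f Nice_L2f)

lemma Nice_K12: "Nice (K12 w)"
  unfolding K12_def Kg_def by (rule Nice_sum) (auto intro!: Nice_kt Nice_mult Nice_L1f Nice_L2f)

lemma wm_id: "(\<And>x y. f x = Some y \<Longrightarrow> y = x) \<Longrightarrow> word_map f q = Some v \<Longrightarrow> v = q"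
  by (auto simp: word_map_def split: if_splits intro!: map_idI)

lemma wm_last: "word_map f w = Some u \<Longrightarrow> u \<noteq> [] \<Longrightarrow> w \<noteq> [] \<and> f (last w) = Some (last u)"
  by (auto simp: word_map_def last_map split: if_splits)

lemma wm_dom: "word_map f w = Some u \<Longrightarrow> x \<in> set w \<Longrightarrow> \<exists>y. f x = Some y"
  by (auto simp: word_map_def split: if_splits)

lemma good_v:
  assumes G: "Good \<phi>" and nz: "\<phi> w \<noteq> 0" and V: "word_map pr1_21 (drop l w) = Some v"
  shows "set v \<subseteq> {zeta1, zeta11, zeta12_1} \<and> (v = [] \<or> last v \<noteq> zeta1)"
proof -
  have vd: "v = drop l w" by (rule wm_id[OF _ V]) (case_tac x; auto)
  have "set v \<subseteq> {zeta1, zeta11}"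
    using word_map_set[OF V] by (auto dest!: pr1_21_range)
  moreover have "v = [] \<or> last v \<noteq> zeta1"
  proof (rule ccontr)
    assume "\<not> (v = [] \<or> last v \<noteq> zeta1)"
    hence ne: "drop l w \<noteq> []" and lst: "last (drop l w) = zeta1" using vd by auto
    have "last w = zeta1" using ne lst by (metis append_take_drop_id last_appendR)
    moreover have "w \<noteq> []" using ne by auto
    ultimately have "w = butlast w @ [zeta1]" by (metis append_butlast_last_id)
    hence "\<phi> w = 0" using G unfolding Good_def by metis
    thus False using nz by simp
  qed
  ultimately show ?thesis by auto
qed

lemma good_u:
  assumes G: "Good \<phi>" and nz: "\<phi> w \<noteq> 0" and U: "word_map pr2_21 (take l w) = Some u"
    and V: "word_map pr1_21 (drop l w) = Some v"
  shows "set u \<subseteq> {zeta2, zeta22, zeta12_2} \<and> (u = [] \<or> last u \<noteq> zeta2)"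
proof -
  have r: "pr2_21 x = Some y \<Longrightarrow> y \<in> {zeta2, zeta22, zeta12_2}" for x y by (cases x) auto
  have "set u \<subseteq> {zeta2, zeta22, zeta12_2}" using word_map_set[OF U] r by blast
  moreover have "u = [] \<or> last u \<noteq> zeta2"
  proof (rule ccontr)
    assume "\<not> (u = [] \<or> last u \<noteq> zeta2)"
    hence une: "u \<noteq> []" and lu: "last u = zeta2" by auto
    from wm_last[OF U une] have tne: "take l w \<noteq> []" and "pr2_21 (last (take l w)) = Some zeta2"
      using lu by auto
    hence lt: "last (take l w) = zeta2" by (cases "last (take l w)") auto
    have dq: "set (drop l w) \<subseteq> {zeta1, zeta11}"
    proof
      fix x assume "x \<in> set (drop l w)"
      then obtain y where "pr1_21 x = Some y" using wm_dom[OF V] by blast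
      thus "x \<in> {zeta1, zeta11}" by (cases x) auto
    qed
    have "w = butlast (take l w) @ zeta2 # drop l w"
      using tne lt by (metis append_butlast_last_id append_take_drop_id append.assoc append_Cons append_Nil)
    hence "\<phi> w = \<phi> (butlast (take l w) @ zeta2 # drop l w)" by simp
    also have "\<dots> = 0" by (rule C2[OF G dq])
    finally show False using nz by simp
  qed
  ultimately show ?thesis by auto
qed

lemma ev_K21:
  assumes G: "Good \<phi>" and nz: "\<phi> w \<noteq> 0" and x: "norm x < 1" and y: "norm y < 1"
  shows "ev (K21 w) x y = Kg pr2_21 pr1_21 (\<lambda>u v. L2 u x y * L1 v x y) w"
proof -
  have "ev (K21 w) x y = (\<Sum>l=0..length w. ev (kt pr2_21 pr1_21 (\<lambda>u v. L2f u * L1f v) w l) x y)"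
    unfolding K21_def Kg_def
    by (rule ev_sum) (auto intro!: Nice_kt Nice_mult Nice_L1f Nice_L2f x y)
  also have "\<dots> = (\<Sum>l=0..length w. kt pr2_21 pr1_21 (\<lambda>u v. L2 u x y * L1 v x y) w l)"
  proof (rule sum.cong[OF refl])
    fix l
    show "ev (kt pr2_21 pr1_21 (\<lambda>u v. L2f u * L1f v) w l) x y = kt pr2_21 pr1_21 (\<lambda>u v. L2 u x y * L1 v x y) w l"
    proof (cases "word_map pr2_21 (take l w)")
      case (Some u)
      show ?thesis
      proof (cases "word_map pr1_21 (drop l w)")
        case (Some v)
        have gu: "set u \<subseteq> {zeta2, zeta22, zeta12_2}" "u = [] \<or> last u \<noteq> zeta2"
          using good_u[OF G nz \<open>word_map pr2_21 (take l w) = Some u\<close> Some] by auto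
        have gv: "set v \<subseteq> {zeta1, zeta11, zeta12_1}" "v = [] \<or> last v \<noteq> zeta1"
          using good_v[OF G nz Some] by auto
        have "ev (L2f u * L1f v) x y = ev (L2f u) x y * ev (L1f v) x y"
          by (rule ev_mult[OF Nice_L2f Nice_L1f x y])
        also have "\<dots> = L2 u x y * L1 v x y"
          using T2[OF gu x y] T1[OF gv y x] by simp
        finally show ?thesis using \<open>word_map pr2_21 (take l w) = Some u\<close> Some by (simp add: kt_def)
      qed (simp add: kt_def \<open>word_map pr2_21 (take l w) = Some u\<close>)
    qed (simp add: kt_def)
  qed
  finally show ?thesis by (simp add: Kg_def)
qed

theorem theorem7p6:
  fixes z1 z2 :: complex and W' W'' :: "gen list" and \<phi> :: "form list \<Rightarrow> complex"
  assumes "0 < norm z1" and "norm z1 < 1" and "0 < norm z2" and "norm z2 < 1"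
    and "W' \<in> W0_1" and "W'' \<in> W0_2"
    and "\<phi> \<in> barB0"
    and "iota12 \<phi> = tensor_basis (theta1 W') (theta2 W'')"
  shows "L1 (theta1 W') z1 z2 * L2 (theta2 W'') z1 z2 = int_C21 (iota21 \<phi>) z1 z2"
proof -
  note x = assms(2) and y = assms(4)
  have G: "Good \<phi>" by (rule barB0_Good[OF assms(7)])
  obtain n where B: "bnd \<phi> n" using barB0_bnd[OF assms(7)] by blast
  have fin: "finite (supp \<phi>)" using assms(7) by (simp add: barB0_def barB_def)
  define u0 where "u0 = theta1 W'"
  define v0 where "v0 = theta2 W''"
  have gu0: "set u0 \<subseteq> {zeta1, zeta11, zeta12_1}" "u0 = [] \<or> last u0 \<noteq> zeta1"
  proof -
    have W: "set W' \<subseteq> {Z1, Z11, Z12}" "W' = [] \<or> last W' \<noteq> Z1" using assms(5) by (auto simp: W0_1_def)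
    thus "set u0 \<subseteq> {zeta1, zeta11, zeta12_1}" by (auto simp: u0_def theta1_def)
    have "W' \<noteq> [] \<Longrightarrow> theta_letter1 (last W') \<noteq> zeta1"
      using W by (cases "last W'") (auto dest: last_in_set)
    thus "u0 = [] \<or> last u0 \<noteq> zeta1" by (auto simp: u0_def theta1_def last_map)
  qed
  have gv0: "set v0 \<subseteq> {zeta2, zeta22, zeta12_2}" "v0 = [] \<or> last v0 \<noteq> zeta2"
  proof -
    have W: "set W'' \<subseteq> {Z2, Z22}" "W'' = [] \<or> last W'' \<noteq> Z2" using assms(6) by (auto simp: W0_2_def)
    thus "set v0 \<subseteq> {zeta2, zeta22, zeta12_2}" by (auto simp: v0_def theta2_def)
    have "W'' \<noteq> [] \<Longrightarrow> theta_letter2 (last W'') \<noteq> zeta2"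
      using W by (cases "last W''") (auto dest: last_in_set)
    thus "v0 = [] \<or> last v0 \<noteq> zeta2" by (auto simp: v0_def theta2_def last_map)
  qed
  have hom: "\<And>a b. cst (a + b) = cst a + cst b" "\<And>a b. cst (a * b) = cst a * cst b" "\<And>n. cst (of_nat n) = of_nat n"
    by (simp_all add: cst_add cst_mult cst_of_nat)
  have F12: "GK K12 n \<phi> = L1f u0 * L2f v0"
  proof -
    have "GK K12 n \<phi> = (\<Sum>w\<in>supp \<phi>. cst (\<phi> w) * Kg pr1_12 pr2_12 (\<lambda>u v. L1f u * L2f v) w)"
      by (simp add: GK_supp[OF B fin] K12_def)
    also have "\<dots> = (\<Sum>p\<in>supp (iota12 \<phi>). cst (iota12 \<phi> p) * (L1f (fst p) * L2f (snd p)))"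
      unfolding iota12_def by (rule iota_sum[OF fin hom, symmetric])
    also have "supp (iota12 \<phi>) = {(u0, v0)}"
      by (auto simp: assms(8) tensor_basis_def supp_def u0_def v0_def)
    finally show ?thesis by (simp add: assms(8) tensor_basis_def u0_def v0_def)
  qed
  have F21: "GK K21 n \<phi> = (\<Sum>w\<in>supp \<phi>. cst (\<phi> w) * K21 w)"
    by (rule GK_supp[OF B fin])
  have "L1 u0 z1 z2 * L2 v0 z1 z2 = ev (L1f u0) z1 z2 * ev (L2f v0) z1 z2"
    using T1[OF gu0 y x] T2[OF gv0 x y] by simp
  also have "\<dots> = ev (GK K12 n \<phi>) z1 z2"
    by (simp add: F12 ev_mult[OF Nice_L1f Nice_L2f x y])
  also have "\<dots> = ev (GK K21 n \<phi>) z1 z2"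
    by (simp add: main_formal[OF G B])
  also have "\<dots> = (\<Sum>w\<in>supp \<phi>. \<phi> w * ev (K21 w) z1 z2)"
    unfolding F21
    by (subst ev_sum) (auto simp: fin ev_mult[OF Nice_cst Nice_K21 x y] intro!: Nice_mult Nice_cst Nice_K21 x y)
  also have "\<dots> = (\<Sum>w\<in>supp \<phi>. \<phi> w * Kg pr2_21 pr1_21 (\<lambda>u v. L2 u z1 z2 * L1 v z1 z2) w)"
    by (intro sum.cong refl) (simp add: ev_K21[OF G _ x y] supp_def)
  also have "\<dots> = (\<Sum>p\<in>supp (iota21 \<phi>). iota21 \<phi> p * (L2 (fst p) z1 z2 * L1 (snd p) z1 z2))"
    unfolding iota21_def by (rule iota_sum[OF fin, where h="\<lambda>c. c", symmetric]) simp_all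
  also have "\<dots> = int_C21 (iota21 \<phi>) z1 z2"
    by (simp add: int_C21_def mult_ac)
  finally show ?thesis by (simp add: u0_def v0_def)
qed



end
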